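(* Let $\mathcal{T},\mathcal{T}'$ be essentially small triangulated categories and let $F:\mathcal{T}\to\mathcal{T}'$ be an exact functor which is a triangle equivalence up to direct summands, i.e. $F$ is fully faithful and every object of $\mathcal{T}'$ is a direct summand of $F(M)$ for some $M\in\mathcal{T}$. For a thick subcategory $\mathcal{Y}$ of $\mathcal{T}'$ put $F^{-1}(\mathcal{Y}):=\{M\in\mathcal{T}\mid F(M)\in\mathcal{Y}\}$. Then: (1) The map $\operatorname{Th}(\mathcal{T}')\to\operatorname{Th}(\mathcal{T})$, $\mathcal{Y}\mapsto F^{-1}(\mathcal{Y})$, is a lattice isomorphism. (2) For a thick subcategory $\mathcal{Q}$ of $\mathcal{T}'$, $\mathcal{Q}$ is a prime thick subcategory of $\mathcal{T}'$ if and only if $F^{-1}(\mathcal{Q})$ is a prime thick subcategory of $\mathcal{T}$. (3) The map ${}^aF:\operatorname{Spec}_\triangle(\mathcal{T}')\to\operatorname{Spec}_\triangle(\mathcal{T})$, $\mathcal{P}\mapsto F^{-1}(\mathcal{P})$, is a homeomorphism.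
   Context: All subcategories are full and additive. $\operatorname{Th}(\mathcal{T})$ denotes the set of thick subcategories of $\mathcal{T}$, ordered by inclusion. A thick subcategory $\mathcal{P}$ of $\mathcal{T}$ is called prime if among all thick subcategories $\mathcal{X}$ of $\mathcal{T}$ with $\mathcal{P}\subsetneq\mathcal{X}$ there is a unique minimal one. $\operatorname{Spec}_\triangle(\mathcal{T})$ is the set of prime thick subcategories of $\mathcal{T}$, topologized by declaring the closed subsets to be the sets $\mathsf{Z}(\mathcal{E}) := \{\mathcal{P}\in\operatorname{Spec}_\triangle(\mathcal{T})\mid \mathcal{P}\cap\mathcal{E}=\emptyset\}$ for families $\mathcal{E}$ of objects of $\mathcal{T}$. *)

theory Defs
  imports Main
begin

text \<open>Objects live in a set ob of some type 'o, hence every category here is small.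
 Composition, addition, zero and negation are indexed by objects, so hom-sets of
 different object pairs may overlap in the type 'm without harm.
 cmp X Y Z g f denotes the composite g o f of f : X -> Y and g : Y -> Z.\<close>

record ('o, 'm) tricat =
  ob    :: "'o set"
  hom   :: "'o \<Rightarrow> 'o \<Rightarrow> 'm set"
  cmp   :: "'o \<Rightarrow> 'o \<Rightarrow> 'o \<Rightarrow> 'm \<Rightarrow> 'm \<Rightarrow> 'm"
  idm   :: "'o \<Rightarrow> 'm"
  addm  :: "'o \<Rightarrow> 'o \<Rightarrow> 'm \<Rightarrow> 'm \<Rightarrow> 'm"
  zerom :: "'o \<Rightarrow> 'o \<Rightarrow> 'm"
  negm  :: "'o \<Rightarrow> 'o \<Rightarrow> 'm \<Rightarrow> 'm"
  sho   :: "'o \<Rightarrow> 'o"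
  shm   :: "'o \<Rightarrow> 'o \<Rightarrow> 'm \<Rightarrow> 'm"
  dist  :: "('o \<times> 'o \<times> 'o \<times> 'm \<times> 'm \<times> 'm) set"

definition is_category :: "('o, 'm, 'z) tricat_scheme \<Rightarrow> bool" where
  "is_category C \<longleftrightarrow>
     (\<forall>X\<in>ob C. idm C X \<in> hom C X X) \<and>
     (\<forall>X\<in>ob C. \<forall>Y\<in>ob C. \<forall>Z\<in>ob C. \<forall>f\<in>hom C X Y. \<forall>g\<in>hom C Y Z.
        cmp C X Y Z g f \<in> hom C X Z) \<and>
     (\<forall>X\<in>ob C. \<forall>Y\<in>ob C. \<forall>Z\<in>ob C. \<forall>W\<in>ob C. \<forall>f\<in>hom C X Y. \<forall>g\<in>hom C Y Z. \<forall>h\<in>hom C Z W.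
        cmp C X Z W h (cmp C X Y Z g f) = cmp C X Y W (cmp C Y Z W h g) f) \<and>
     (\<forall>X\<in>ob C. \<forall>Y\<in>ob C. \<forall>f\<in>hom C X Y.
        cmp C X Y Y (idm C Y) f = f \<and> cmp C X X Y f (idm C X) = f)"

definition is_iso :: "('o, 'm, 'z) tricat_scheme \<Rightarrow> 'o \<Rightarrow> 'o \<Rightarrow> 'm \<Rightarrow> bool" where
  "is_iso C X Y f \<longleftrightarrow> f \<in> hom C X Y \<and>
     (\<exists>g\<in>hom C Y X. cmp C X Y X g f = idm C X \<and> cmp C Y X Y f g = idm C Y)"

definition is_zero_obj :: "('o, 'm, 'z) tricat_scheme \<Rightarrow> 'o \<Rightarrow> bool" where
  "is_zero_obj C Z \<longleftrightarrow> Z \<in> ob C \<and>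
     (\<forall>X\<in>ob C. hom C Z X = {zerom C Z X} \<and> hom C X Z = {zerom C X Z})"

definition is_biproduct :: "('o, 'm, 'z) tricat_scheme \<Rightarrow> 'o \<Rightarrow> 'o \<Rightarrow> 'o \<Rightarrow> 'm \<Rightarrow> 'm \<Rightarrow> 'm \<Rightarrow> 'm \<Rightarrow> bool" where
  "is_biproduct C X Y S i1 i2 p1 p2 \<longleftrightarrow>
     X \<in> ob C \<and> Y \<in> ob C \<and> S \<in> ob C \<and>
     i1 \<in> hom C X S \<and> i2 \<in> hom C Y S \<and> p1 \<in> hom C S X \<and> p2 \<in> hom C S Y \<and>
     cmp C X S X p1 i1 = idm C X \<and> cmp C Y S Y p2 i2 = idm C Y \<and>
     cmp C X S Y p2 i1 = zerom C X Y \<and> cmp C Y S X p1 i2 = zerom C Y X \<and>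
     addm C S S (cmp C S X S i1 p1) (cmp C S Y S i2 p2) = idm C S"

definition is_additive :: "('o, 'm, 'z) tricat_scheme \<Rightarrow> bool" where
  "is_additive C \<longleftrightarrow> is_category C \<and>
     (\<forall>X\<in>ob C. \<forall>Y\<in>ob C.
        zerom C X Y \<in> hom C X Y \<and>
        (\<forall>f\<in>hom C X Y. \<forall>g\<in>hom C X Y. addm C X Y f g \<in> hom C X Y) \<and>
        (\<forall>f\<in>hom C X Y. negm C X Y f \<in> hom C X Y) \<and>
        (\<forall>f\<in>hom C X Y. \<forall>g\<in>hom C X Y. \<forall>h\<in>hom C X Y.
           addm C X Y (addm C X Y f g) h = addm C X Y f (addm C X Y g h)) \<and>
        (\<forall>f\<in>hom C X Y. \<forall>g\<in>hom C X Y. addm C X Y f g = addm C X Y g f) \<and>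
        (\<forall>f\<in>hom C X Y. addm C X Y f (zerom C X Y) = f) \<and>
        (\<forall>f\<in>hom C X Y. addm C X Y f (negm C X Y f) = zerom C X Y)) \<and>
     (\<forall>X\<in>ob C. \<forall>Y\<in>ob C. \<forall>Z\<in>ob C. \<forall>f\<in>hom C X Y. \<forall>f'\<in>hom C X Y. \<forall>g\<in>hom C Y Z. \<forall>g'\<in>hom C Y Z.
        cmp C X Y Z g (addm C X Y f f') = addm C X Z (cmp C X Y Z g f) (cmp C X Y Z g f') \<and>
        cmp C X Y Z (addm C Y Z g g') f = addm C X Z (cmp C X Y Z g f) (cmp C X Y Z g' f)) \<and>
     (\<exists>Z. is_zero_obj C Z) \<and>
     (\<forall>X\<in>ob C. \<forall>Y\<in>ob C. \<exists>S i1 i2 p1 p2. is_biproduct C X Y S i1 i2 p1 p2)"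

definition shift_ok :: "('o, 'm, 'z) tricat_scheme \<Rightarrow> bool" where
  "shift_ok C \<longleftrightarrow>
     (\<forall>X\<in>ob C. sho C X \<in> ob C) \<and>
     (\<forall>X\<in>ob C. \<forall>Y\<in>ob C. bij_betw (shm C X Y) (hom C X Y) (hom C (sho C X) (sho C Y))) \<and>
     (\<forall>X\<in>ob C. shm C X X (idm C X) = idm C (sho C X)) \<and>
     (\<forall>X\<in>ob C. \<forall>Y\<in>ob C. \<forall>Z\<in>ob C. \<forall>f\<in>hom C X Y. \<forall>g\<in>hom C Y Z.
        shm C X Z (cmp C X Y Z g f) = cmp C (sho C X) (sho C Y) (sho C Z) (shm C Y Z g) (shm C X Y f)) \<and>
     (\<forall>X\<in>ob C. \<forall>Y\<in>ob C. \<forall>f\<in>hom C X Y. \<forall>g\<in>hom C X Y.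
        shm C X Y (addm C X Y f g) = addm C (sho C X) (sho C Y) (shm C X Y f) (shm C X Y g)) \<and>
     (\<forall>Y\<in>ob C. \<exists>X\<in>ob C. \<exists>u. is_iso C (sho C X) Y u)"

definition is_triangle :: "('o, 'm, 'z) tricat_scheme \<Rightarrow> 'o \<Rightarrow> 'o \<Rightarrow> 'o \<Rightarrow> 'm \<Rightarrow> 'm \<Rightarrow> 'm \<Rightarrow> bool" where
  "is_triangle C X Y Z f g h \<longleftrightarrow> X \<in> ob C \<and> Y \<in> ob C \<and> Z \<in> ob C \<and>
     f \<in> hom C X Y \<and> g \<in> hom C Y Z \<and> h \<in> hom C Z (sho C X)"

definition tri_morph :: "('o, 'm, 'z) tricat_scheme \<Rightarrow> 'o \<Rightarrow> 'o \<Rightarrow> 'o \<Rightarrow> 'm \<Rightarrow> 'm \<Rightarrow> 'm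
    \<Rightarrow> 'o \<Rightarrow> 'o \<Rightarrow> 'o \<Rightarrow> 'm \<Rightarrow> 'm \<Rightarrow> 'm \<Rightarrow> 'm \<Rightarrow> 'm \<Rightarrow> 'm \<Rightarrow> bool" where
  "tri_morph C X Y Z f g h X' Y' Z' f' g' h' a b c \<longleftrightarrow>
     a \<in> hom C X X' \<and> b \<in> hom C Y Y' \<and> c \<in> hom C Z Z' \<and>
     cmp C X Y Y' b f = cmp C X X' Y' f' a \<and>
     cmp C Y Z Z' c g = cmp C Y Y' Z' g' b \<and>
     cmp C Z (sho C X) (sho C X') (shm C X X' a) h = cmp C Z Z' (sho C X') h' c"

definition is_triangulated :: "('o, 'm, 'z) tricat_scheme \<Rightarrow> bool" where
  "is_triangulated C \<longleftrightarrow> is_additive C \<and> shift_ok C \<and>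
     (\<forall>(X,Y,Z,f,g,h)\<in>dist C. is_triangle C X Y Z f g h) \<and>
     \<comment> \<open>TR1: closure under isomorphic triangles\<close>
     (\<forall>X Y Z f g h X' Y' Z' f' g' h' a b c.
        (X,Y,Z,f,g,h) \<in> dist C \<longrightarrow> is_triangle C X' Y' Z' f' g' h' \<longrightarrow>
        tri_morph C X Y Z f g h X' Y' Z' f' g' h' a b c \<longrightarrow>
        is_iso C X X' a \<longrightarrow> is_iso C Y Y' b \<longrightarrow> is_iso C Z Z' c \<longrightarrow>
        (X',Y',Z',f',g',h') \<in> dist C) \<and>
     \<comment> \<open>TR1: X --id--> X --> 0 --> Sigma X is distinguished\<close>
     (\<forall>X\<in>ob C. \<forall>Z. is_zero_obj C Z \<longrightarrow>
        (X, X, Z, idm C X, zerom C X Z, zerom C Z (sho C X)) \<in> dist C) \<and>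
     \<comment> \<open>TR1: every morphism extends to a distinguished triangle\<close>
     (\<forall>X\<in>ob C. \<forall>Y\<in>ob C. \<forall>f\<in>hom C X Y. \<exists>Z g h. (X,Y,Z,f,g,h) \<in> dist C) \<and>
     \<comment> \<open>TR2: rotation\<close>
     (\<forall>X Y Z f g h. is_triangle C X Y Z f g h \<longrightarrow>
        ((X,Y,Z,f,g,h) \<in> dist C \<longleftrightarrow>
         (Y, Z, sho C X, g, h, negm C (sho C X) (sho C Y) (shm C X Y f)) \<in> dist C)) \<and>
     \<comment> \<open>TR3: completion of morphisms of triangles\<close>
     (\<forall>X Y Z f g h X' Y' Z' f' g' h' a b.
        (X,Y,Z,f,g,h) \<in> dist C \<longrightarrow> (X',Y',Z',f',g',h') \<in> dist C \<longrightarrow>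
        a \<in> hom C X X' \<longrightarrow> b \<in> hom C Y Y' \<longrightarrow>
        cmp C X Y Y' b f = cmp C X X' Y' f' a \<longrightarrow>
        (\<exists>c. tri_morph C X Y Z f g h X' Y' Z' f' g' h' a b c)) \<and>
     \<comment> \<open>TR4: octahedral axiom\<close>
     (\<forall>X Y Z Z' X' Y' f g f2 f3 g2 g3 h2 h3.
        (X,Y,Z',f,f2,f3) \<in> dist C \<longrightarrow> (Y,Z,X',g,g2,g3) \<in> dist C \<longrightarrow>
        (X,Z,Y',cmp C X Y Z g f,h2,h3) \<in> dist C \<longrightarrow>
        (\<exists>u v. (Z', Y', X', u, v, cmp C X' (sho C Y) (sho C Z') (shm C Y Z' f2) g3) \<in> dist C \<and>
           cmp C Y Z' Y' u f2 = cmp C Y Z Y' h2 g \<and>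
           cmp C Z' Y' (sho C X) h3 u = f3 \<and>
           cmp C Z Y' X' v h2 = g2 \<and>
           cmp C Y' X' (sho C Y) g3 v = cmp C Y' (sho C X) (sho C Y) (shm C X Y f) h3))"

text \<open>An exact functor is given by its object map fo, morphism map fm (fm X Y on hom X Y)
 and a natural isomorphism phi X : F(Sigma X) -> Sigma'(F X).\<close>
definition exact_functor :: "('o, 'm, 'z) tricat_scheme \<Rightarrow> ('p, 'n, 'y) tricat_scheme
    \<Rightarrow> ('o \<Rightarrow> 'p) \<Rightarrow> ('o \<Rightarrow> 'o \<Rightarrow> 'm \<Rightarrow> 'n) \<Rightarrow> ('o \<Rightarrow> 'n) \<Rightarrow> bool" where
  "exact_functor C D fo fm phi \<longleftrightarrow>
     (\<forall>X\<in>ob C. fo X \<in> ob D) \<and>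
     (\<forall>X\<in>ob C. \<forall>Y\<in>ob C. \<forall>f\<in>hom C X Y. fm X Y f \<in> hom D (fo X) (fo Y)) \<and>
     (\<forall>X\<in>ob C. fm X X (idm C X) = idm D (fo X)) \<and>
     (\<forall>X\<in>ob C. \<forall>Y\<in>ob C. \<forall>Z\<in>ob C. \<forall>f\<in>hom C X Y. \<forall>g\<in>hom C Y Z.
        fm X Z (cmp C X Y Z g f) = cmp D (fo X) (fo Y) (fo Z) (fm Y Z g) (fm X Y f)) \<and>
     (\<forall>X\<in>ob C. \<forall>Y\<in>ob C. \<forall>f\<in>hom C X Y. \<forall>g\<in>hom C X Y.
        fm X Y (addm C X Y f g) = addm D (fo X) (fo Y) (fm X Y f) (fm X Y g)) \<and>
     (\<forall>X\<in>ob C. is_iso D (fo (sho C X)) (sho D (fo X)) (phi X)) \<and>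
     (\<forall>X\<in>ob C. \<forall>Y\<in>ob C. \<forall>f\<in>hom C X Y.
        cmp D (fo (sho C X)) (fo (sho C Y)) (sho D (fo Y)) (phi Y) (fm (sho C X) (sho C Y) (shm C X Y f))
        = cmp D (fo (sho C X)) (sho D (fo X)) (sho D (fo Y)) (shm D (fo X) (fo Y) (fm X Y f)) (phi X)) \<and>
     (\<forall>(X,Y,Z,f,g,h)\<in>dist C.
        (fo X, fo Y, fo Z, fm X Y f, fm Y Z g,
         cmp D (fo Z) (fo (sho C X)) (sho D (fo X)) (phi X) (fm Z (sho C X) h)) \<in> dist D)"

definition fully_faithful :: "('o, 'm, 'z) tricat_scheme \<Rightarrow> ('p, 'n, 'y) tricat_scheme
    \<Rightarrow> ('o \<Rightarrow> 'p) \<Rightarrow> ('o \<Rightarrow> 'o \<Rightarrow> 'm \<Rightarrow> 'n) \<Rightarrow> bool" where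
  "fully_faithful C D fo fm \<longleftrightarrow>
     (\<forall>X\<in>ob C. \<forall>Y\<in>ob C. bij_betw (fm X Y) (hom C X Y) (hom D (fo X) (fo Y)))"

definition is_summand :: "('o, 'm, 'z) tricat_scheme \<Rightarrow> 'o \<Rightarrow> 'o \<Rightarrow> bool" where
  "is_summand C X Y \<longleftrightarrow> (\<exists>W i1 i2 p1 p2. is_biproduct C X W Y i1 i2 p1 p2)"

text \<open>Subcategories are full, so they are identified with their sets of objects.\<close>
definition thick :: "('o, 'm, 'z) tricat_scheme \<Rightarrow> 'o set \<Rightarrow> bool" where
  "thick C S \<longleftrightarrow> S \<subseteq> ob C \<and> S \<noteq> {} \<and>
     (\<forall>X\<in>ob C. X \<in> S \<longleftrightarrow> sho C X \<in> S) \<and>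
     (\<forall>X\<in>ob C. \<forall>Y\<in>ob C. \<forall>u. is_iso C X Y u \<longrightarrow> X \<in> S \<longrightarrow> Y \<in> S) \<and>
     (\<forall>(X,Y,Z,f,g,h)\<in>dist C.
        (X \<in> S \<longrightarrow> Y \<in> S \<longrightarrow> Z \<in> S) \<and> (Y \<in> S \<longrightarrow> Z \<in> S \<longrightarrow> X \<in> S) \<and>
        (Z \<in> S \<longrightarrow> X \<in> S \<longrightarrow> Y \<in> S)) \<and>
     (\<forall>X\<in>ob C. \<forall>Y\<in>S. is_summand C X Y \<longrightarrow> X \<in> S)"

definition Th :: "('o, 'm, 'z) tricat_scheme \<Rightarrow> 'o set set" where
  "Th C = {S. thick C S}"

text \<open>Join in the lattice Th(C): smallest thick subcategory containing both (meet is intersection).\<close>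
definition thick_join :: "('o, 'm, 'z) tricat_scheme \<Rightarrow> 'o set \<Rightarrow> 'o set \<Rightarrow> 'o set" where
  "thick_join C A B = \<Inter>{S. thick C S \<and> A \<union> B \<subseteq> S}"

definition prime_thick :: "('o, 'm, 'z) tricat_scheme \<Rightarrow> 'o set \<Rightarrow> bool" where
  "prime_thick C P \<longleftrightarrow> thick C P \<and>
     (\<exists>!X. thick C X \<and> P \<subset> X \<and> \<not> (\<exists>X'. thick C X' \<and> P \<subset> X' \<and> X' \<subset> X))"

definition Spec :: "('o, 'm, 'z) tricat_scheme \<Rightarrow> 'o set set" where
  "Spec C = {P. prime_thick C P}"

definition Zset :: "('o, 'm, 'z) tricat_scheme \<Rightarrow> 'o set \<Rightarrow> 'o set set" where
  "Zset C E = {P \<in> Spec C. P \<inter> E = {}}"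

text \<open>Closed subsets of Spec(C) are exactly the sets Zset C E, E a family of objects.\<close>
definition spec_closed :: "('o, 'm, 'z) tricat_scheme \<Rightarrow> 'o set set \<Rightarrow> bool" where
  "spec_closed C A \<longleftrightarrow> (\<exists>E. E \<subseteq> ob C \<and> A = Zset C E)"

definition preim :: "('o, 'm, 'z) tricat_scheme \<Rightarrow> ('o \<Rightarrow> 'p) \<Rightarrow> 'p set \<Rightarrow> 'o set" where
  "preim C fo Y = {M \<in> ob C. fo M \<in> Y}"

definition spec_homeo :: "('p, 'n, 'y) tricat_scheme \<Rightarrow> ('o, 'm, 'z) tricat_scheme
    \<Rightarrow> ('p set \<Rightarrow> 'o set) \<Rightarrow> bool" where
  "spec_homeo D C g \<longleftrightarrow> bij_betw g (Spec D) (Spec C) \<and>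
     (\<forall>A. spec_closed C A \<longrightarrow> spec_closed D {P \<in> Spec D. g P \<in> A}) \<and>
     (\<forall>B. spec_closed D B \<longrightarrow> spec_closed C (g ` B))"

end

theory Submission
  imports Defs
begin

locale tcat =
  fixes C :: "('o, 'm, 'z) tricat_scheme"
  assumes tri: "is_triangulated C"
begin

lemma add: "is_additive C"
  using tri unfolding is_triangulated_def by meson
lemma cat: "is_category C"
  using add unfolding is_additive_def by meson
lemma shok: "shift_ok C"
  using tri unfolding is_triangulated_def by meson

lemma idm_hom[simp,intro]: "X \<in> ob C \<Longrightarrow> idm C X \<in> hom C X X"
  using cat unfolding is_category_def by meson
lemma cmp_hom[intro]: "X \<in> ob C \<Longrightarrow> Y \<in> ob C \<Longrightarrow> Z \<in> ob C \<Longrightarrow> f \<in> hom C X Y \<Longrightarrow> g \<in> hom C Y Z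
  \<Longrightarrow> cmp C X Y Z g f \<in> hom C X Z"
  using cat unfolding is_category_def by meson
lemma assoc: "X \<in> ob C \<Longrightarrow> Y \<in> ob C \<Longrightarrow> Z \<in> ob C \<Longrightarrow> W \<in> ob C \<Longrightarrow> f \<in> hom C X Y \<Longrightarrow> g \<in> hom C Y Z
  \<Longrightarrow> h \<in> hom C Z W \<Longrightarrow> cmp C X Z W h (cmp C X Y Z g f) = cmp C X Y W (cmp C Y Z W h g) f"
  using cat unfolding is_category_def by meson
lemma id_l[simp]: "X \<in> ob C \<Longrightarrow> Y \<in> ob C \<Longrightarrow> f \<in> hom C X Y \<Longrightarrow> cmp C X Y Y (idm C Y) f = f"
  using cat unfolding is_category_def by meson
lemma id_r[simp]: "X \<in> ob C \<Longrightarrow> Y \<in> ob C \<Longrightarrow> f \<in> hom C X Y \<Longrightarrow> cmp C X X Y f (idm C X) = f"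
  using cat unfolding is_category_def by meson

lemma zero_hom[simp,intro]: "X \<in> ob C \<Longrightarrow> Y \<in> ob C \<Longrightarrow> zerom C X Y \<in> hom C X Y"
proof -
  assume "X \<in> ob C" "Y \<in> ob C"
  moreover have "\<forall>X\<in>ob C. \<forall>Y\<in>ob C. zerom C X Y \<in> hom C X Y"
    using add unfolding is_additive_def by meson
  ultimately show ?thesis by blast
qed
lemma add_hom[intro]: "X \<in> ob C \<Longrightarrow> Y \<in> ob C \<Longrightarrow> f \<in> hom C X Y \<Longrightarrow> g \<in> hom C X Y \<Longrightarrow> addm C X Y f g \<in> hom C X Y"
  using add unfolding is_additive_def by meson
lemma neg_hom[intro]: "X \<in> ob C \<Longrightarrow> Y \<in> ob C \<Longrightarrow> f \<in> hom C X Y \<Longrightarrow> negm C X Y f \<in> hom C X Y"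
  using add unfolding is_additive_def by meson
lemma add_assoc: "X \<in> ob C \<Longrightarrow> Y \<in> ob C \<Longrightarrow> f \<in> hom C X Y \<Longrightarrow> g \<in> hom C X Y \<Longrightarrow> h \<in> hom C X Y \<Longrightarrow>
  addm C X Y (addm C X Y f g) h = addm C X Y f (addm C X Y g h)"
  using add unfolding is_additive_def by meson
lemma add_comm: "X \<in> ob C \<Longrightarrow> Y \<in> ob C \<Longrightarrow> f \<in> hom C X Y \<Longrightarrow> g \<in> hom C X Y \<Longrightarrow> addm C X Y f g = addm C X Y g f"
  using add unfolding is_additive_def by meson
lemma add_zero[simp]: "X \<in> ob C \<Longrightarrow> Y \<in> ob C \<Longrightarrow> f \<in> hom C X Y \<Longrightarrow> addm C X Y f (zerom C X Y) = f"
  using add unfolding is_additive_def by meson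
lemma add_neg[simp]: "X \<in> ob C \<Longrightarrow> Y \<in> ob C \<Longrightarrow> f \<in> hom C X Y \<Longrightarrow> addm C X Y f (negm C X Y f) = zerom C X Y"
  using add unfolding is_additive_def by meson
lemma cmp_add_r: "X \<in> ob C \<Longrightarrow> Y \<in> ob C \<Longrightarrow> Z \<in> ob C \<Longrightarrow> f \<in> hom C X Y \<Longrightarrow> f' \<in> hom C X Y \<Longrightarrow> g \<in> hom C Y Z \<Longrightarrow>
  cmp C X Y Z g (addm C X Y f f') = addm C X Z (cmp C X Y Z g f) (cmp C X Y Z g f')"
  using add unfolding is_additive_def by meson
lemma cmp_add_l: "X \<in> ob C \<Longrightarrow> Y \<in> ob C \<Longrightarrow> Z \<in> ob C \<Longrightarrow> f \<in> hom C X Y \<Longrightarrow> g \<in> hom C Y Z \<Longrightarrow> g' \<in> hom C Y Z \<Longrightarrow>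
  cmp C X Y Z (addm C Y Z g g') f = addm C X Z (cmp C X Y Z g f) (cmp C X Y Z g' f)"
  using add unfolding is_additive_def by meson
lemma zero_exists: "\<exists>Z. is_zero_obj C Z"
  using add unfolding is_additive_def by meson

lemma add_zero_l[simp]: "X \<in> ob C \<Longrightarrow> Y \<in> ob C \<Longrightarrow> f \<in> hom C X Y \<Longrightarrow> addm C X Y (zerom C X Y) f = f"
  using add_comm[of X Y "zerom C X Y" f] by simp
lemma add_neg_l[simp]: "X \<in> ob C \<Longrightarrow> Y \<in> ob C \<Longrightarrow> f \<in> hom C X Y \<Longrightarrow> addm C X Y (negm C X Y f) f = zerom C X Y"
  using add_comm[of X Y "negm C X Y f" f] by (simp add: neg_hom)
lemma add_cancel_l: assumes "X \<in> ob C" "Y \<in> ob C" "a \<in> hom C X Y" "b \<in> hom C X Y" "c \<in> hom C X Y"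
  "addm C X Y a b = addm C X Y a c" shows "b = c"
proof -
  have "b = addm C X Y (addm C X Y (negm C X Y a) a) b" using assms by simp
  also have "\<dots> = addm C X Y (negm C X Y a) (addm C X Y a b)" using assms(1-5) by (intro add_assoc) auto
  also have "\<dots> = addm C X Y (negm C X Y a) (addm C X Y a c)" by (simp only: assms(6))
  also have "\<dots> = addm C X Y (addm C X Y (negm C X Y a) a) c" using assms(1-5) by (intro add_assoc[symmetric]) auto
  also have "\<dots> = c" using assms by simp
  finally show ?thesis .
qed
lemma neg_unique: "X \<in> ob C \<Longrightarrow> Y \<in> ob C \<Longrightarrow> a \<in> hom C X Y \<Longrightarrow> b \<in> hom C X Y \<Longrightarrow>
  addm C X Y a b = zerom C X Y \<Longrightarrow> b = negm C X Y a"
  using add_cancel_l[of X Y a b "negm C X Y a"] by (simp add: neg_hom)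
lemma idem_zero: "X \<in> ob C \<Longrightarrow> Y \<in> ob C \<Longrightarrow> a \<in> hom C X Y \<Longrightarrow> addm C X Y a a = a \<Longrightarrow> a = zerom C X Y"
  using add_cancel_l[of X Y a a "zerom C X Y"] by simp
lemma neg_neg[simp]: "X \<in> ob C \<Longrightarrow> Y \<in> ob C \<Longrightarrow> a \<in> hom C X Y \<Longrightarrow> negm C X Y (negm C X Y a) = a"
  using neg_unique[of X Y "negm C X Y a" a] by (simp add: neg_hom)
lemma neg_zero[simp]: "X \<in> ob C \<Longrightarrow> Y \<in> ob C \<Longrightarrow> negm C X Y (zerom C X Y) = zerom C X Y"
  using neg_unique[of X Y "zerom C X Y" "zerom C X Y"] by simp
lemma neg_eq_zero: "X \<in> ob C \<Longrightarrow> Y \<in> ob C \<Longrightarrow> a \<in> hom C X Y \<Longrightarrow> negm C X Y a = zerom C X Y \<Longrightarrow> a = zerom C X Y"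
  using neg_neg[of X Y a] by simp
lemma add_lcomm: "X \<in> ob C \<Longrightarrow> Y \<in> ob C \<Longrightarrow> a \<in> hom C X Y \<Longrightarrow> b \<in> hom C X Y \<Longrightarrow> c \<in> hom C X Y \<Longrightarrow>
  addm C X Y a (addm C X Y b c) = addm C X Y b (addm C X Y a c)"
  using add_assoc[of X Y a b c] add_assoc[of X Y b a c] add_comm[of X Y a b] by simp

lemma cmp_zero_r[simp]: assumes "X \<in> ob C" "Y \<in> ob C" "Z \<in> ob C" "g \<in> hom C Y Z"
  shows "cmp C X Y Z g (zerom C X Y) = zerom C X Z"
proof -
  have "cmp C X Y Z g (zerom C X Y) = cmp C X Y Z g (addm C X Y (zerom C X Y) (zerom C X Y))" using assms by simp
  also have "\<dots> = addm C X Z (cmp C X Y Z g (zerom C X Y)) (cmp C X Y Z g (zerom C X Y))"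
    using assms by (intro cmp_add_r) auto
  finally show ?thesis using idem_zero[of X Z "cmp C X Y Z g (zerom C X Y)"] assms by (simp add: cmp_hom)
qed
lemma cmp_zero_l[simp]: assumes "X \<in> ob C" "Y \<in> ob C" "Z \<in> ob C" "f \<in> hom C X Y"
  shows "cmp C X Y Z (zerom C Y Z) f = zerom C X Z"
proof -
  have "cmp C X Y Z (zerom C Y Z) f = cmp C X Y Z (addm C Y Z (zerom C Y Z) (zerom C Y Z)) f" using assms by simp
  also have "\<dots> = addm C X Z (cmp C X Y Z (zerom C Y Z) f) (cmp C X Y Z (zerom C Y Z) f)"
    using assms by (intro cmp_add_l) auto
  finally show ?thesis using idem_zero[of X Z "cmp C X Y Z (zerom C Y Z) f"] assms by (simp add: cmp_hom)
qed
lemma cmp_neg_r: assumes "X \<in> ob C" "Y \<in> ob C" "Z \<in> ob C" "f \<in> hom C X Y" "g \<in> hom C Y Z"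
  shows "cmp C X Y Z g (negm C X Y f) = negm C X Z (cmp C X Y Z g f)"
proof (rule neg_unique)
  show "addm C X Z (cmp C X Y Z g f) (cmp C X Y Z g (negm C X Y f)) = zerom C X Z"
    using assms cmp_add_r[of X Y Z f "negm C X Y f" g] by (simp add: neg_hom)
qed (use assms in \<open>auto intro: neg_hom\<close>)
lemma cmp_neg_l: assumes "X \<in> ob C" "Y \<in> ob C" "Z \<in> ob C" "f \<in> hom C X Y" "g \<in> hom C Y Z"
  shows "cmp C X Y Z (negm C Y Z g) f = negm C X Z (cmp C X Y Z g f)"
proof (rule neg_unique)
  show "addm C X Z (cmp C X Y Z g f) (cmp C X Y Z (negm C Y Z g) f) = zerom C X Z"
    using assms cmp_add_l[of X Y Z f g "negm C Y Z g"] by (simp add: neg_hom)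
qed (use assms in \<open>auto intro: neg_hom\<close>)

end

context tcat begin

lemma sho_ob[simp,intro]: "X \<in> ob C \<Longrightarrow> sho C X \<in> ob C"
  using shok unfolding shift_ok_def by meson
lemma shm_bij: "X \<in> ob C \<Longrightarrow> Y \<in> ob C \<Longrightarrow> bij_betw (shm C X Y) (hom C X Y) (hom C (sho C X) (sho C Y))"
  using shok unfolding shift_ok_def by meson
lemma shm_hom[intro]: "X \<in> ob C \<Longrightarrow> Y \<in> ob C \<Longrightarrow> f \<in> hom C X Y \<Longrightarrow> shm C X Y f \<in> hom C (sho C X) (sho C Y)"
  using shm_bij bij_betwE by blast
lemma shm_id[simp]: "X \<in> ob C \<Longrightarrow> shm C X X (idm C X) = idm C (sho C X)"
  using shok unfolding shift_ok_def by meson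
lemma shm_cmp: "X \<in> ob C \<Longrightarrow> Y \<in> ob C \<Longrightarrow> Z \<in> ob C \<Longrightarrow> f \<in> hom C X Y \<Longrightarrow> g \<in> hom C Y Z \<Longrightarrow>
  shm C X Z (cmp C X Y Z g f) = cmp C (sho C X) (sho C Y) (sho C Z) (shm C Y Z g) (shm C X Y f)"
  using shok unfolding shift_ok_def by meson
lemma shm_add: "X \<in> ob C \<Longrightarrow> Y \<in> ob C \<Longrightarrow> f \<in> hom C X Y \<Longrightarrow> g \<in> hom C X Y \<Longrightarrow>
  shm C X Y (addm C X Y f g) = addm C (sho C X) (sho C Y) (shm C X Y f) (shm C X Y g)"
  using shok unfolding shift_ok_def by meson
lemma sh_esurj: "Y \<in> ob C \<Longrightarrow> \<exists>X\<in>ob C. \<exists>u. is_iso C (sho C X) Y u"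
  using shok unfolding shift_ok_def by meson
lemma shm_inj: "X \<in> ob C \<Longrightarrow> Y \<in> ob C \<Longrightarrow> f \<in> hom C X Y \<Longrightarrow> g \<in> hom C X Y \<Longrightarrow> shm C X Y f = shm C X Y g \<Longrightarrow> f = g"
  using shm_bij unfolding bij_betw_def inj_on_def by blast
lemma shm_surj: "X \<in> ob C \<Longrightarrow> Y \<in> ob C \<Longrightarrow> c \<in> hom C (sho C X) (sho C Y) \<Longrightarrow> \<exists>u\<in>hom C X Y. c = shm C X Y u"
  using shm_bij unfolding bij_betw_def by blast
lemma shm_zero[simp]: assumes "X \<in> ob C" "Y \<in> ob C" shows "shm C X Y (zerom C X Y) = zerom C (sho C X) (sho C Y)"
proof -
  have "shm C X Y (zerom C X Y) = shm C X Y (addm C X Y (zerom C X Y) (zerom C X Y))" using assms by simp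
  also have "\<dots> = addm C (sho C X) (sho C Y) (shm C X Y (zerom C X Y)) (shm C X Y (zerom C X Y))"
    using assms by (intro shm_add) auto
  finally show ?thesis using idem_zero[of "sho C X" "sho C Y" "shm C X Y (zerom C X Y)"] assms by auto
qed
lemma shm_neg: assumes "X \<in> ob C" "Y \<in> ob C" "f \<in> hom C X Y"
  shows "shm C X Y (negm C X Y f) = negm C (sho C X) (sho C Y) (shm C X Y f)"
proof (rule neg_unique)
  show "addm C (sho C X) (sho C Y) (shm C X Y f) (shm C X Y (negm C X Y f)) = zerom C (sho C X) (sho C Y)"
    using assms shm_add[of X Y f "negm C X Y f"] by (simp add: neg_hom)
qed (use assms in \<open>auto intro: neg_hom\<close>)

lemma dist_tri: assumes "(X,Y,Z,f,g,h) \<in> dist C" shows "is_triangle C X Y Z f g h"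
proof -
  have "\<forall>(X, Y, Z, f, g, h)\<in>dist C. is_triangle C X Y Z f g h"
    using tri unfolding is_triangulated_def by meson
  then show ?thesis using assms by fastforce
qed
lemma distD: assumes "(X,Y,Z,f,g,h) \<in> dist C"
  shows "X \<in> ob C" "Y \<in> ob C" "Z \<in> ob C" "f \<in> hom C X Y" "g \<in> hom C Y Z" "h \<in> hom C Z (sho C X)"
  using dist_tri[OF assms] unfolding is_triangle_def by auto
lemma tr_iso: "(X,Y,Z,f,g,h) \<in> dist C \<Longrightarrow> is_triangle C X' Y' Z' f' g' h' \<Longrightarrow>
        tri_morph C X Y Z f g h X' Y' Z' f' g' h' a b c \<Longrightarrow>
        is_iso C X X' a \<Longrightarrow> is_iso C Y Y' b \<Longrightarrow> is_iso C Z Z' c \<Longrightarrow>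
        (X',Y',Z',f',g',h') \<in> dist C"
  using tri unfolding is_triangulated_def by meson
lemma tr_triv: "X \<in> ob C \<Longrightarrow> is_zero_obj C Z \<Longrightarrow>
        (X, X, Z, idm C X, zerom C X Z, zerom C Z (sho C X)) \<in> dist C"
  using tri unfolding is_triangulated_def by meson
lemma tr_ext: "X \<in> ob C \<Longrightarrow> Y \<in> ob C \<Longrightarrow> f \<in> hom C X Y \<Longrightarrow> \<exists>Z g h. (X,Y,Z,f,g,h) \<in> dist C"
  using tri unfolding is_triangulated_def by meson
lemma tr_rot_iff: "is_triangle C X Y Z f g h \<Longrightarrow>
        ((X,Y,Z,f,g,h) \<in> dist C \<longleftrightarrow>
         (Y, Z, sho C X, g, h, negm C (sho C X) (sho C Y) (shm C X Y f)) \<in> dist C)"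
  using tri unfolding is_triangulated_def by meson
lemma tr_rot: "(X,Y,Z,f,g,h) \<in> dist C \<Longrightarrow> (Y, Z, sho C X, g, h, negm C (sho C X) (sho C Y) (shm C X Y f)) \<in> dist C"
  using tr_rot_iff dist_tri by blast
lemma tr3: "(X,Y,Z,f,g,h) \<in> dist C \<Longrightarrow> (X',Y',Z',f',g',h') \<in> dist C \<Longrightarrow>
        a \<in> hom C X X' \<Longrightarrow> b \<in> hom C Y Y' \<Longrightarrow>
        cmp C X Y Y' b f = cmp C X X' Y' f' a \<Longrightarrow>
        (\<exists>c. tri_morph C X Y Z f g h X' Y' Z' f' g' h' a b c)"
  using tri unfolding is_triangulated_def by meson
lemma tr4: "(X,Y,Z',f,f2,f3) \<in> dist C \<Longrightarrow> (Y,Z,X',g,g2,g3) \<in> dist C \<Longrightarrow>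
        (X,Z,Y',cmp C X Y Z g f,h2,h3) \<in> dist C \<Longrightarrow>
        (\<exists>u v. (Z', Y', X', u, v, cmp C X' (sho C Y) (sho C Z') (shm C Y Z' f2) g3) \<in> dist C)"
  using tri unfolding is_triangulated_def by meson

end

context tcat begin

lemma neg_inj: "X \<in> ob C \<Longrightarrow> Y \<in> ob C \<Longrightarrow> a \<in> hom C X Y \<Longrightarrow> b \<in> hom C X Y \<Longrightarrow> negm C X Y a = negm C X Y b \<Longrightarrow> a = b"
  by (metis neg_neg)
lemma zero_ob: "is_zero_obj C Z \<Longrightarrow> Z \<in> ob C"
  unfolding is_zero_obj_def by blast
lemma zero_from: "is_zero_obj C Z \<Longrightarrow> X \<in> ob C \<Longrightarrow> u \<in> hom C Z X \<Longrightarrow> u = zerom C Z X"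
  unfolding is_zero_obj_def by blast
lemma zero_to: "is_zero_obj C Z \<Longrightarrow> X \<in> ob C \<Longrightarrow> u \<in> hom C X Z \<Longrightarrow> u = zerom C X Z"
  unfolding is_zero_obj_def by blast

lemma sh_zero_hom: assumes "is_zero_obj C Z" "X \<in> ob C"
  shows "u \<in> hom C (sho C Z) (sho C X) \<Longrightarrow> u = zerom C (sho C Z) (sho C X)"
    and "u \<in> hom C (sho C X) (sho C Z) \<Longrightarrow> u = zerom C (sho C X) (sho C Z)"
proof -
  have Z: "Z \<in> ob C" using assms zero_ob by blast
  assume u: "u \<in> hom C (sho C Z) (sho C X)"
  then obtain v where "v \<in> hom C Z X" "u = shm C Z X v" using shm_surj Z assms by blast
  moreover have "v = zerom C Z X" using zero_from[OF assms(1,2)] \<open>v \<in> hom C Z X\<close> by blast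
  ultimately show "u = zerom C (sho C Z) (sho C X)" using Z assms by simp
next
  have Z: "Z \<in> ob C" using assms zero_ob by blast
  assume u: "u \<in> hom C (sho C X) (sho C Z)"
  then obtain v where "v \<in> hom C X Z" "u = shm C X Z v" using shm_surj Z assms by blast
  moreover have "v = zerom C X Z" using zero_to[OF assms(1,2)] \<open>v \<in> hom C X Z\<close> by blast
  ultimately show "u = zerom C (sho C X) (sho C Z)" using Z assms by simp
qed

lemma iso_D: "is_iso C X Y f \<Longrightarrow> \<exists>g\<in>hom C Y X. cmp C X Y X g f = idm C X \<and> cmp C Y X Y f g = idm C Y"
  unfolding is_iso_def by blast
lemma iso_hom: "is_iso C X Y f \<Longrightarrow> f \<in> hom C X Y"
  unfolding is_iso_def by blast

lemma sh_zero: assumes "is_zero_obj C Z" shows "is_zero_obj C (sho C Z)"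
proof -
  have Z: "Z \<in> ob C" using assms zero_ob by blast
  have "hom C (sho C Z) X = {zerom C (sho C Z) X} \<and> hom C X (sho C Z) = {zerom C X (sho C Z)}" if X: "X \<in> ob C" for X
  proof -
    obtain X' \<phi> where X': "X' \<in> ob C" and iso: "is_iso C (sho C X') X \<phi>" using sh_esurj X by blast
    obtain \<psi> where \<psi>: "\<psi> \<in> hom C X (sho C X')" "cmp C (sho C X') X (sho C X') \<psi> \<phi> = idm C (sho C X')"
      "cmp C X (sho C X') X \<phi> \<psi> = idm C X" using iso_D[OF iso] by blast
    have \<phi>: "\<phi> \<in> hom C (sho C X') X" using iso iso_hom by blast
    have 1: "u = zerom C (sho C Z) X" if u: "u \<in> hom C (sho C Z) X" for u
    proof -
      have "cmp C (sho C Z) X (sho C X') \<psi> u = zerom C (sho C Z) (sho C X')"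
        using sh_zero_hom(1)[OF assms X'] u \<psi> X X' Z by blast
      then have "cmp C (sho C Z) (sho C X') X \<phi> (cmp C (sho C Z) X (sho C X') \<psi> u) = zerom C (sho C Z) X"
        using \<phi> X X' Z by simp
      moreover have "cmp C (sho C Z) (sho C X') X \<phi> (cmp C (sho C Z) X (sho C X') \<psi> u) = u"
        using assoc[of "sho C Z" X "sho C X'" X u \<psi> \<phi>] \<psi> \<phi> u X X' Z by simp
      ultimately show ?thesis by simp
    qed
    have 2: "u = zerom C X (sho C Z)" if u: "u \<in> hom C X (sho C Z)" for u
    proof -
      have "cmp C (sho C X') X (sho C Z) u \<phi> = zerom C (sho C X') (sho C Z)"
        using sh_zero_hom(2)[OF assms X'] u \<phi> X X' Z by blast
      then have "cmp C X (sho C X') (sho C Z) (cmp C (sho C X') X (sho C Z) u \<phi>) \<psi> = zerom C X (sho C Z)"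
        using \<psi> X X' Z by simp
      moreover have "cmp C X (sho C X') (sho C Z) (cmp C (sho C X') X (sho C Z) u \<phi>) \<psi> = u"
        using assoc[of X "sho C X'" X "sho C Z" \<psi> \<phi> u] \<psi> \<phi> u X X' Z by simp
      ultimately show ?thesis by simp
    qed
    show ?thesis using 1 2 X Z by auto
  qed
  then show ?thesis unfolding is_zero_obj_def using Z by auto
qed

definition z0 where "z0 = (SOME Z. is_zero_obj C Z)"
lemma z0: "is_zero_obj C z0"
  unfolding z0_def using zero_exists someI_ex by metis
lemma z0_ob[simp,intro]: "z0 \<in> ob C" using z0 zero_ob by blast

lemma comp_zero: assumes d: "(X,Y,Z,f,g,h) \<in> dist C" shows "cmp C X Y Z g f = zerom C X Z"
proof -
  note D = distD[OF d]
  have t: "(X, X, z0, idm C X, zerom C X z0, zerom C z0 (sho C X)) \<in> dist C"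
    using tr_triv D z0 by blast
  obtain c where "tri_morph C X X z0 (idm C X) (zerom C X z0) (zerom C z0 (sho C X)) X Y Z f g h (idm C X) f c"
    using tr3[OF t d] D by fastforce
  then have "c \<in> hom C z0 Z" "cmp C X z0 Z c (zerom C X z0) = cmp C X Y Z g f"
    unfolding tri_morph_def using D by auto
  then show ?thesis using D by simp
qed

lemma comp_zero2: assumes d: "(X,Y,Z,f,g,h) \<in> dist C" shows "cmp C Y Z (sho C X) h g = zerom C Y (sho C X)"
  using comp_zero[OF tr_rot[OF d]] .

lemma comp_zero3: assumes d: "(X,Y,Z,f,g,h) \<in> dist C"
  shows "cmp C Z (sho C X) (sho C Y) (shm C X Y f) h = zerom C Z (sho C Y)"
proof -
  note D = distD[OF d]
  have "cmp C Z (sho C X) (sho C Y) (negm C (sho C X) (sho C Y) (shm C X Y f)) h = zerom C Z (sho C Y)"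
    using comp_zero[OF tr_rot[OF tr_rot[OF d]]] .
  then show ?thesis using D cmp_neg_l[of Z "sho C X" "sho C Y" h "shm C X Y f"]
    by (metis cmp_hom neg_eq_zero shm_hom sho_ob)
qed

lemma exact_cov: assumes d: "(X,Y,Z,f,g,h) \<in> dist C" and W: "W \<in> ob C" and v: "v \<in> hom C W Y"
  and gv: "cmp C W Y Z g v = zerom C W Z"
  shows "\<exists>u\<in>hom C W X. cmp C W X Y f u = v"
proof -
  note D = distD[OF d]
  have t0: "(W, W, z0, idm C W, zerom C W z0, zerom C z0 (sho C W)) \<in> dist C"
    using tr_triv W z0 by blast
  have t: "(W, z0, sho C W, zerom C W z0, zerom C z0 (sho C W), negm C (sho C W) (sho C W) (idm C (sho C W))) \<in> dist C"
    using tr_rot[OF t0] W by simp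
  have sq1: "cmp C W z0 Z (zerom C z0 Z) (zerom C W z0) = cmp C W Y Z g v" using gv W D by simp
  obtain c where tm: "tri_morph C W z0 (sho C W) (zerom C W z0) (zerom C z0 (sho C W)) (negm C (sho C W) (sho C W) (idm C (sho C W)))
     Y Z (sho C X) g h (negm C (sho C X) (sho C Y) (shm C X Y f)) v (zerom C z0 Z) c"
    using tr3[OF t tr_rot[OF d] _ _ sq1] v D by auto
  then have c: "c \<in> hom C (sho C W) (sho C X)" and
    sq3: "cmp C (sho C W) (sho C W) (sho C Y) (shm C W Y v) (negm C (sho C W) (sho C W) (idm C (sho C W)))
        = cmp C (sho C W) (sho C X) (sho C Y) (negm C (sho C X) (sho C Y) (shm C X Y f)) c"
    unfolding tri_morph_def by auto
  have "negm C (sho C W) (sho C Y) (shm C W Y v) = negm C (sho C W) (sho C Y) (cmp C (sho C W) (sho C X) (sho C Y) (shm C X Y f) c)"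
    using sq3 W D c v by (simp add: cmp_neg_r cmp_neg_l shm_hom)
  then have e: "shm C W Y v = cmp C (sho C W) (sho C X) (sho C Y) (shm C X Y f) c"
    using neg_inj W D c v by (meson cmp_hom shm_hom sho_ob)
  obtain u where u: "u \<in> hom C W X" "c = shm C W X u" using shm_surj W D c by blast
  have "shm C W Y v = shm C W Y (cmp C W X Y f u)" using e u W D by (simp add: shm_cmp)
  then have "v = cmp C W X Y f u" using shm_inj W D u v by (meson cmp_hom)
  then show ?thesis using u by blast
qed

lemma tr_triv2: assumes W: "W \<in> ob C" shows "(z0, W, W, zerom C z0 W, idm C W, zerom C W (sho C z0)) \<in> dist C"
proof -
  have it: "is_triangle C z0 W W (zerom C z0 W) (idm C W) (zerom C W (sho C z0))"
    unfolding is_triangle_def using W by auto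
  have "(W, W, sho C z0, idm C W, zerom C W (sho C z0), zerom C (sho C z0) (sho C W)) \<in> dist C"
    using tr_triv W sh_zero z0 by blast
  then have "(W, W, sho C z0, idm C W, zerom C W (sho C z0), negm C (sho C z0) (sho C W) (shm C z0 W (zerom C z0 W))) \<in> dist C"
    using W by simp
  then show ?thesis using tr_rot_iff[OF it] by blast
qed

lemma exact_contra: assumes d: "(X,Y,Z,f,g,h) \<in> dist C" and W: "W \<in> ob C" and v: "v \<in> hom C Y W"
  and vf: "cmp C X Y W v f = zerom C X W"
  shows "\<exists>t\<in>hom C Z W. cmp C Y Z W t g = v"
proof -
  note D = distD[OF d]
  have sq1: "cmp C X Y W v f = cmp C X z0 W (zerom C z0 W) (zerom C X z0)" using vf W D by simp
  obtain c where tm: "tri_morph C X Y Z f g h z0 W W (zerom C z0 W) (idm C W) (zerom C W (sho C z0)) (zerom C X z0) v c"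
    using tr3[OF d tr_triv2[OF W] _ _ sq1] v D W by auto
  then have "c \<in> hom C Z W" "cmp C Y Z W c g = cmp C Y W W (idm C W) v"
    unfolding tri_morph_def by auto
  then show ?thesis using v W D by auto
qed

end

context tcat begin

lemmas homs = cmp_hom add_hom neg_hom idm_hom zero_hom shm_hom sho_ob

lemma nilp_inv: assumes Z: "Z \<in> ob C" and a: "a \<in> hom C Z Z" and aa: "cmp C Z Z Z a a = zerom C Z Z"
  shows "is_iso C Z Z (addm C Z Z (idm C Z) a)"
proof -
  let ?e = "idm C Z" and ?b = "negm C Z Z a"
  let ?p = "addm C Z Z ?e a" and ?q = "addm C Z Z ?e ?b"
  have pa: "cmp C Z Z Z ?p a = a" using Z a aa by (simp add: cmp_add_l homs)
  have qa: "cmp C Z Z Z ?q a = a" using Z a aa by (simp add: cmp_add_l cmp_neg_l homs)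
  have "cmp C Z Z Z ?p ?q = addm C Z Z ?p (negm C Z Z a)"
    using Z a pa by (simp add: cmp_add_r cmp_neg_r homs)
  also have "\<dots> = ?e" using Z a by (simp add: add_assoc homs)
  finally have 1: "cmp C Z Z Z ?p ?q = ?e" .
  have "cmp C Z Z Z ?q ?p = addm C Z Z ?q a"
    using Z a qa by (simp add: cmp_add_r homs)
  also have "\<dots> = ?e" using Z a by (simp add: add_assoc homs)
  finally have 2: "cmp C Z Z Z ?q ?p = ?e" .
  show ?thesis unfolding is_iso_def using 1 2 Z a by (auto intro!: bexI[of _ ?q] simp: homs)
qed

lemma five_endo: assumes d: "(X,Y,Z,f,g,h) \<in> dist C" and \<phi>: "\<phi> \<in> hom C Z Z"
  and \<phi>g: "cmp C Y Z Z \<phi> g = g" and h\<phi>: "cmp C Z Z (sho C X) h \<phi> = h"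
  shows "is_iso C Z Z \<phi>"
proof -
  note D = distD[OF d]
  define \<psi> where "\<psi> = addm C Z Z \<phi> (negm C Z Z (idm C Z))"
  have \<psi>: "\<psi> \<in> hom C Z Z" unfolding \<psi>_def using \<phi> D by (simp add: homs)
  have "cmp C Y Z Z \<psi> g = zerom C Y Z"
    unfolding \<psi>_def using \<phi> D \<phi>g by (simp add: cmp_add_l cmp_neg_l homs)
  then obtain t where t: "t \<in> hom C (sho C X) Z" "cmp C Z (sho C X) Z t h = \<psi>"
    using exact_contra[OF tr_rot[OF d] _ \<psi>] D by blast
  have "cmp C Z Z (sho C X) h \<psi> = zerom C Z (sho C X)"
    unfolding \<psi>_def using \<phi> D h\<phi> by (simp add: cmp_add_r cmp_neg_r homs)
  then obtain u where u: "u \<in> hom C Z Y" "cmp C Z Y Z g u = \<psi>"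
    using exact_cov[OF tr_rot[OF d] _ \<psi>] D by blast
  have "cmp C Z Z Z \<psi> \<psi> = cmp C Z Z Z (cmp C Z (sho C X) Z t h) (cmp C Z Y Z g u)" using t u by simp
  also have "\<dots> = cmp C Z (sho C X) Z t (cmp C Z Z (sho C X) h (cmp C Z Y Z g u))"
    by (rule assoc[symmetric]) (use t u D in \<open>auto intro: homs\<close>)
  also have "cmp C Z Z (sho C X) h (cmp C Z Y Z g u) = cmp C Z Y (sho C X) (cmp C Y Z (sho C X) h g) u"
    using assoc[of Z Y Z "sho C X" u g h] u D by simp
  also have "\<dots> = zerom C Z (sho C X)" using comp_zero2[OF d] u D by simp
  finally have \<psi>\<psi>: "cmp C Z Z Z \<psi> \<psi> = zerom C Z Z" using t D by simp
  have "\<phi> = addm C Z Z (idm C Z) \<psi>"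
  proof -
    have "addm C Z Z (idm C Z) \<psi> = addm C Z Z \<phi> (addm C Z Z (negm C Z Z (idm C Z)) (idm C Z))"
      unfolding \<psi>_def using \<phi> D by (simp add: add_lcomm homs)
    then show ?thesis using \<phi> D by simp
  qed
  then show ?thesis using nilp_inv[OF _ \<psi> \<psi>\<psi>] D by simp
qed

definition retr where "retr A B \<longleftrightarrow> (\<exists>i\<in>hom C A B. \<exists>p\<in>hom C B A. cmp C A B A p i = idm C A)"

lemma L_split: assumes d: "(A,B,K,i,g,h) \<in> dist C" and p: "p \<in> hom C B A" and pi: "cmp C A B A p i = idm C A"
  shows "\<exists>s\<in>hom C K B. cmp C K B K g s = idm C K \<and> cmp C K B A p s = zerom C K A \<and>
           addm C B B (cmp C B A B i p) (cmp C B K B s g) = idm C B"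
proof -
  note D = distD[OF d]
  have "cmp C K (sho C A) (sho C B) (shm C A B i) h = zerom C K (sho C B)" using comp_zero3[OF d] .
  then have "cmp C K (sho C B) (sho C A) (shm C B A p) (cmp C K (sho C A) (sho C B) (shm C A B i) h) = zerom C K (sho C A)"
    using D p by (simp add: homs)
  moreover have "cmp C K (sho C B) (sho C A) (shm C B A p) (cmp C K (sho C A) (sho C B) (shm C A B i) h) = h"
    using assoc[of K "sho C A" "sho C B" "sho C A" h "shm C A B i" "shm C B A p"] D p pi
    by (simp add: homs shm_cmp[symmetric])
  ultimately have h0: "h = zerom C K (sho C A)" by simp
  have "cmp C K K (sho C A) h (idm C K) = zerom C K (sho C A)" using h0 D by simp
  then obtain s0 where s0: "s0 \<in> hom C K B" "cmp C K B K g s0 = idm C K"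
    using exact_cov[OF tr_rot[OF d] _ idm_hom] D by blast
  define s where "s = addm C K B s0 (negm C K B (cmp C K A B i (cmp C K B A p s0)))"
  have s: "s \<in> hom C K B" unfolding s_def using s0 D p by (simp add: homs)
  have gi: "cmp C A B K g i = zerom C A K" using comp_zero[OF d] .
  have gipx: "cmp C K B K g (cmp C K A B i x) = zerom C K K" if "x \<in> hom C K A" for x
    using assoc[of K A B K x i g] gi that D by simp
  have gs: "cmp C K B K g s = idm C K"
    unfolding s_def using s0 D p gipx[of "cmp C K B A p s0"] by (simp add: cmp_add_r cmp_neg_r homs)
  have "cmp C K B A p (cmp C K A B i (cmp C K B A p s0)) = cmp C K B A p s0"
    using assoc[of K A B A "cmp C K B A p s0" i p] pi D p s0 by (simp add: homs)
  then have ps: "cmp C K B A p s = zerom C K A"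
    unfolding s_def using s0 D p by (simp add: cmp_add_r cmp_neg_r homs)
  define E where "E = addm C B B (idm C B) (negm C B B (addm C B B (cmp C B A B i p) (cmp C B K B s g)))"
  have E: "E \<in> hom C B B" unfolding E_def using s D p by (simp add: homs)
  have ipi: "cmp C A B B (cmp C B A B i p) i = i"
    using assoc[of A B A B i p i] pi D p by simp
  have sgi: "cmp C A B B (cmp C B K B s g) i = zerom C A B"
    using assoc[of A B K B i g s] gi D s by simp
  have "cmp C A B B E i = zerom C A B"
    unfolding E_def using D p s ipi sgi by (simp add: cmp_add_l cmp_neg_l homs)
  then obtain t where t: "t \<in> hom C K B" "cmp C B K B t g = E"
    using exact_contra[OF d _ E] D by blast
  have ips: "cmp C K B B (cmp C B A B i p) s = zerom C K B"
    using assoc[of K B A B s p i] ps D p s by simp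
  have sgs: "cmp C K B B (cmp C B K B s g) s = s"
    using assoc[of K B K B s g s] gs D s by simp
  have Es: "cmp C K B B E s = zerom C K B"
    unfolding E_def using D p s ips sgs by (simp add: cmp_add_l cmp_neg_l homs)
  have "t = cmp C K K B t (cmp C K B K g s)" using gs t D by simp
  also have "\<dots> = cmp C K B B E s" using assoc[of K B K B s g t] t D s by simp
  finally have "t = zerom C K B" using Es by simp
  then have "E = zerom C B B" using t D by simp
  then have "addm C B B (cmp C B A B i p) (cmp C B K B s g) = idm C B"
    unfolding E_def using D p s
    by (metis add_hom cmp_hom idm_hom neg_hom neg_neg neg_unique)
  then show ?thesis using s gs ps by blast
qed

lemma RS: assumes A: "A \<in> ob C" and B: "B \<in> ob C" and r: "retr A B" shows "is_summand C A B"
proof -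
  obtain i p where i: "i \<in> hom C A B" and p: "p \<in> hom C B A" and pi: "cmp C A B A p i = idm C A"
    using r unfolding retr_def by blast
  obtain K g h where d: "(A,B,K,i,g,h) \<in> dist C" using tr_ext A B i by blast
  note D = distD[OF d]
  obtain s where s: "s \<in> hom C K B" "cmp C K B K g s = idm C K" "cmp C K B A p s = zerom C K A"
     "addm C B B (cmp C B A B i p) (cmp C B K B s g) = idm C B" using L_split[OF d p pi] by blast
  have "is_biproduct C A K B i s p g"
    unfolding is_biproduct_def using D s p pi comp_zero[OF d] by auto
  then show ?thesis unfolding is_summand_def by blast
qed

end

context tcat begin

lemma thick_sub: "thick C S \<Longrightarrow> S \<subseteq> ob C" unfolding thick_def by blast
lemma thick_ne: "thick C S \<Longrightarrow> S \<noteq> {}" unfolding thick_def by blast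
lemma thick_sh: "thick C S \<Longrightarrow> X \<in> ob C \<Longrightarrow> X \<in> S \<longleftrightarrow> sho C X \<in> S" unfolding thick_def by blast
lemma thick_iso: "thick C S \<Longrightarrow> X \<in> ob C \<Longrightarrow> Y \<in> ob C \<Longrightarrow> is_iso C X Y u \<Longrightarrow> X \<in> S \<Longrightarrow> Y \<in> S"
  unfolding thick_def by blast
lemma thick_summ: "thick C S \<Longrightarrow> X \<in> ob C \<Longrightarrow> Y \<in> S \<Longrightarrow> is_summand C X Y \<Longrightarrow> X \<in> S"
  unfolding thick_def by blast
lemma thick_tri: assumes "thick C S" "(X,Y,Z,f,g,h) \<in> dist C"
  shows "X \<in> S \<Longrightarrow> Y \<in> S \<Longrightarrow> Z \<in> S" "Y \<in> S \<Longrightarrow> Z \<in> S \<Longrightarrow> X \<in> S" "Z \<in> S \<Longrightarrow> X \<in> S \<Longrightarrow> Y \<in> S"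
proof -
  have "\<forall>(X,Y,Z,f,g,h)\<in>dist C.
        (X \<in> S \<longrightarrow> Y \<in> S \<longrightarrow> Z \<in> S) \<and> (Y \<in> S \<longrightarrow> Z \<in> S \<longrightarrow> X \<in> S) \<and>
        (Z \<in> S \<longrightarrow> X \<in> S \<longrightarrow> Y \<in> S)" using assms(1) unfolding thick_def by meson
  then have "(X \<in> S \<longrightarrow> Y \<in> S \<longrightarrow> Z \<in> S) \<and> (Y \<in> S \<longrightarrow> Z \<in> S \<longrightarrow> X \<in> S) \<and>
        (Z \<in> S \<longrightarrow> X \<in> S \<longrightarrow> Y \<in> S)" using assms(2) by fastforce
  then show "X \<in> S \<Longrightarrow> Y \<in> S \<Longrightarrow> Z \<in> S" "Y \<in> S \<Longrightarrow> Z \<in> S \<Longrightarrow> X \<in> S" "Z \<in> S \<Longrightarrow> X \<in> S \<Longrightarrow> Y \<in> S"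
    by auto
qed

lemma thickI:
  assumes "S \<subseteq> ob C" "S \<noteq> {}"
    "\<And>X. X \<in> ob C \<Longrightarrow> X \<in> S \<longleftrightarrow> sho C X \<in> S"
    "\<And>X Y u. X \<in> ob C \<Longrightarrow> Y \<in> ob C \<Longrightarrow> is_iso C X Y u \<Longrightarrow> X \<in> S \<Longrightarrow> Y \<in> S"
    "\<And>X Y Z f g h. (X,Y,Z,f,g,h) \<in> dist C \<Longrightarrow> X \<in> S \<Longrightarrow> Y \<in> S \<Longrightarrow> Z \<in> S"
    "\<And>X Y Z f g h. (X,Y,Z,f,g,h) \<in> dist C \<Longrightarrow> Y \<in> S \<Longrightarrow> Z \<in> S \<Longrightarrow> X \<in> S"
    "\<And>X Y Z f g h. (X,Y,Z,f,g,h) \<in> dist C \<Longrightarrow> Z \<in> S \<Longrightarrow> X \<in> S \<Longrightarrow> Y \<in> S"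
    "\<And>X Y. X \<in> ob C \<Longrightarrow> Y \<in> S \<Longrightarrow> is_summand C X Y \<Longrightarrow> X \<in> S"
  shows "thick C S"
  unfolding thick_def
  apply (intro conjI)
  using assms(1) apply blast
  using assms(2) apply blast
  using assms(3) apply blast
  using assms(4) apply blast
   apply clarify
  using assms(5-7) apply blast
  using assms(8) apply blast
  done

lemma thick_zero: assumes S: "thick C S" and Z: "is_zero_obj C Z" shows "Z \<in> S"
proof -
  obtain X where X: "X \<in> S" using thick_ne[OF S] by blast
  then have "X \<in> ob C" using thick_sub[OF S] by blast
  then show ?thesis using thick_tri(1)[OF S tr_triv[OF _ Z]] X by blast
qed

lemma summ_retr: "is_summand C A B \<Longrightarrow> retr A B"
  unfolding is_summand_def is_biproduct_def retr_def by blast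

lemma thick_retr: "thick C S \<Longrightarrow> A \<in> ob C \<Longrightarrow> B \<in> S \<Longrightarrow> retr A B \<Longrightarrow> A \<in> S"
  using thick_summ RS thick_sub by blast

lemma retr_refl: "A \<in> ob C \<Longrightarrow> retr A A"
  unfolding retr_def by (intro bexI[of _ "idm C A"]) auto

lemma retr_trans: assumes A: "A \<in> ob C" and B: "B \<in> ob C" and K: "K \<in> ob C"
  and r1: "retr A B" and r2: "retr B K" shows "retr A K"
proof -
  obtain i p where i: "i \<in> hom C A B" "p \<in> hom C B A" "cmp C A B A p i = idm C A" using r1 unfolding retr_def by blast
  obtain j q where j: "j \<in> hom C B K" "q \<in> hom C K B" "cmp C B K B q j = idm C B" using r2 unfolding retr_def by blast
  have "cmp C A K A (cmp C K B A p q) (cmp C A B K j i) = cmp C A B A p (cmp C A K B q (cmp C A B K j i))"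
    by (rule assoc[symmetric]) (use A B K i j in \<open>auto intro: cmp_hom\<close>)
  also have "cmp C A K B q (cmp C A B K j i) = i" using assoc[of A B K B i j q] A B K i j by simp
  finally have "cmp C A K A (cmp C K B A p q) (cmp C A B K j i) = idm C A" using i by simp
  then show ?thesis unfolding retr_def using A B K i j by (meson cmp_hom)
qed

lemma iso_retr: assumes "X \<in> ob C" "Y \<in> ob C" "is_iso C X Y u" shows "retr X Y" "retr Y X"
  using assms unfolding is_iso_def retr_def by blast+

lemma thick_ob: "thick C (ob C)"
proof (rule thickI)
  show "ob C \<noteq> {}" using z0_ob by blast
  show "X \<in> ob C \<Longrightarrow> X \<in> ob C \<longleftrightarrow> sho C X \<in> ob C" for X by simp
  show "(X,Y,Z,f,g,h) \<in> dist C \<Longrightarrow> X \<in> ob C \<Longrightarrow> Y \<in> ob C \<Longrightarrow> Z \<in> ob C" for X Y Z f g h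
    by (rule distD(3))
  show "(X,Y,Z,f,g,h) \<in> dist C \<Longrightarrow> Y \<in> ob C \<Longrightarrow> Z \<in> ob C \<Longrightarrow> X \<in> ob C" for X Y Z f g h
    by (rule distD(1))
  show "(X,Y,Z,f,g,h) \<in> dist C \<Longrightarrow> Z \<in> ob C \<Longrightarrow> X \<in> ob C \<Longrightarrow> Y \<in> ob C" for X Y Z f g h
    by (rule distD(2))
qed auto

lemma thick_Inter: assumes ne: "\<SS> \<noteq> {}" and th: "\<And>S. S \<in> \<SS> \<Longrightarrow> thick C S" shows "thick C (\<Inter>\<SS>)"
proof (rule thickI)
  show "\<Inter>\<SS> \<subseteq> ob C" using ne th thick_sub by blast
  show "\<Inter>\<SS> \<noteq> {}" using th thick_zero[OF _ z0] by blast
  show "X \<in> ob C \<Longrightarrow> X \<in> \<Inter>\<SS> \<longleftrightarrow> sho C X \<in> \<Inter>\<SS>" for X using th thick_sh by blast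
  show "X \<in> ob C \<Longrightarrow> Y \<in> ob C \<Longrightarrow> is_iso C X Y u \<Longrightarrow> X \<in> \<Inter>\<SS> \<Longrightarrow> Y \<in> \<Inter>\<SS>" for X Y u
    using th thick_iso by blast
  show "(X,Y,Z,f,g,h) \<in> dist C \<Longrightarrow> X \<in> \<Inter>\<SS> \<Longrightarrow> Y \<in> \<Inter>\<SS> \<Longrightarrow> Z \<in> \<Inter>\<SS>" for X Y Z f g h
  proof -
    assume d: "(X,Y,Z,f,g,h) \<in> dist C" and "X \<in> \<Inter>\<SS>" "Y \<in> \<Inter>\<SS>"
    then show "Z \<in> \<Inter>\<SS>" using thick_tri(1)[OF th d] by blast
  qed
  show "(X,Y,Z,f,g,h) \<in> dist C \<Longrightarrow> Y \<in> \<Inter>\<SS> \<Longrightarrow> Z \<in> \<Inter>\<SS> \<Longrightarrow> X \<in> \<Inter>\<SS>" for X Y Z f g h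
  proof -
    assume d: "(X,Y,Z,f,g,h) \<in> dist C" and "Y \<in> \<Inter>\<SS>" "Z \<in> \<Inter>\<SS>"
    then show "X \<in> \<Inter>\<SS>" using thick_tri(2)[OF th d] by blast
  qed
  show "(X,Y,Z,f,g,h) \<in> dist C \<Longrightarrow> Z \<in> \<Inter>\<SS> \<Longrightarrow> X \<in> \<Inter>\<SS> \<Longrightarrow> Y \<in> \<Inter>\<SS>" for X Y Z f g h
  proof -
    assume d: "(X,Y,Z,f,g,h) \<in> dist C" and "Z \<in> \<Inter>\<SS>" "X \<in> \<Inter>\<SS>"
    then show "Y \<in> \<Inter>\<SS>" using thick_tri(3)[OF th d] by blast
  qed
  show "X \<in> ob C \<Longrightarrow> Y \<in> \<Inter>\<SS> \<Longrightarrow> is_summand C X Y \<Longrightarrow> X \<in> \<Inter>\<SS>" for X Y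
    using th thick_summ by blast
qed

lemma thick_join_thick: assumes "A \<union> B \<subseteq> ob C" shows "thick C (thick_join C A B)" "A \<union> B \<subseteq> thick_join C A B"
  "\<And>S. thick C S \<Longrightarrow> A \<union> B \<subseteq> S \<Longrightarrow> thick_join C A B \<subseteq> S"
proof -
  show "thick C (thick_join C A B)" unfolding thick_join_def
    by (rule thick_Inter) (use assms thick_ob in auto)
qed (auto simp: thick_join_def)

end

locale tfun = S: tcat T + D: tcat T' for T :: "('o,'m,'z) tricat_scheme" and T' :: "('p,'n,'y) tricat_scheme" +
  fixes fo :: "'o \<Rightarrow> 'p" and fm :: "'o \<Rightarrow> 'o \<Rightarrow> 'm \<Rightarrow> 'n" and phi :: "'o \<Rightarrow> 'n"
  assumes ex: "exact_functor T T' fo fm phi" and ff: "fully_faithful T T' fo fm"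
    and dense: "\<forall>Y\<in>ob T'. \<exists>M\<in>ob T. is_summand T' Y (fo M)"
begin

lemma fo_ob[simp,intro]: "X \<in> ob T \<Longrightarrow> fo X \<in> ob T'"
  using ex unfolding exact_functor_def by meson
lemma fm_hom[intro]: "X \<in> ob T \<Longrightarrow> Y \<in> ob T \<Longrightarrow> f \<in> hom T X Y \<Longrightarrow> fm X Y f \<in> hom T' (fo X) (fo Y)"
  using ex unfolding exact_functor_def by meson
lemma fm_id[simp]: "X \<in> ob T \<Longrightarrow> fm X X (idm T X) = idm T' (fo X)"
  using ex unfolding exact_functor_def by meson
lemma fm_cmp: "X \<in> ob T \<Longrightarrow> Y \<in> ob T \<Longrightarrow> Z \<in> ob T \<Longrightarrow> f \<in> hom T X Y \<Longrightarrow> g \<in> hom T Y Z \<Longrightarrow>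
        fm X Z (cmp T X Y Z g f) = cmp T' (fo X) (fo Y) (fo Z) (fm Y Z g) (fm X Y f)"
  using ex unfolding exact_functor_def by meson
lemma phi_iso: "X \<in> ob T \<Longrightarrow> is_iso T' (fo (sho T X)) (sho T' (fo X)) (phi X)"
  using ex unfolding exact_functor_def by meson
lemma fm_dist: assumes "(X,Y,Z,f,g,h) \<in> dist T"
  shows "(fo X, fo Y, fo Z, fm X Y f, fm Y Z g,
         cmp T' (fo Z) (fo (sho T X)) (sho T' (fo X)) (phi X) (fm Z (sho T X) h)) \<in> dist T'"
proof -
  have "\<forall>(X,Y,Z,f,g,h)\<in>dist T.
        (fo X, fo Y, fo Z, fm X Y f, fm Y Z g,
         cmp T' (fo Z) (fo (sho T X)) (sho T' (fo X)) (phi X) (fm Z (sho T X) h)) \<in> dist T'"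
    using ex unfolding exact_functor_def by meson
  then show ?thesis using assms by fastforce
qed
lemma fm_bij: "X \<in> ob T \<Longrightarrow> Y \<in> ob T \<Longrightarrow> bij_betw (fm X Y) (hom T X Y) (hom T' (fo X) (fo Y))"
  using ff unfolding fully_faithful_def by blast
lemma fm_inj: "X \<in> ob T \<Longrightarrow> Y \<in> ob T \<Longrightarrow> f \<in> hom T X Y \<Longrightarrow> g \<in> hom T X Y \<Longrightarrow> fm X Y f = fm X Y g \<Longrightarrow> f = g"
  using fm_bij unfolding bij_betw_def inj_on_def by blast
lemma fm_surj: "X \<in> ob T \<Longrightarrow> Y \<in> ob T \<Longrightarrow> c \<in> hom T' (fo X) (fo Y) \<Longrightarrow> \<exists>u\<in>hom T X Y. c = fm X Y u"
  using fm_bij unfolding bij_betw_def by blast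

lemma fm_retr: assumes A: "A \<in> ob T" and B: "B \<in> ob T" and r: "S.retr A B" shows "D.retr (fo A) (fo B)"
proof -
  obtain i p where i: "i \<in> hom T A B" "p \<in> hom T B A" "cmp T A B A p i = idm T A" using r unfolding S.retr_def by blast
  have "cmp T' (fo A) (fo B) (fo A) (fm B A p) (fm A B i) = idm T' (fo A)"
    using fm_cmp[of A B A i p, symmetric] i A B by simp
  then show ?thesis unfolding D.retr_def using i A B by blast
qed

lemma ff_retr: assumes A: "A \<in> ob T" and B: "B \<in> ob T" and r: "D.retr (fo A) (fo B)" shows "S.retr A B"
proof -
  obtain i' p' where i': "i' \<in> hom T' (fo A) (fo B)" "p' \<in> hom T' (fo B) (fo A)"
    "cmp T' (fo A) (fo B) (fo A) p' i' = idm T' (fo A)" using r unfolding D.retr_def by blast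
  obtain i where i: "i \<in> hom T A B" "i' = fm A B i" using fm_surj A B i' by blast
  obtain p where p: "p \<in> hom T B A" "p' = fm B A p" using fm_surj A B i' by blast
  have "fm A A (cmp T A B A p i) = fm A A (idm T A)" using fm_cmp[of A B A i p] i p i' A B by simp
  then have "cmp T A B A p i = idm T A" using fm_inj A B i p by (meson S.cmp_hom S.idm_hom)
  then show ?thesis unfolding S.retr_def using i p by blast
qed

lemma fz_retr: "D.retr (fo S.z0) D.z0"
proof -
  have hz: "hom T S.z0 S.z0 = {zerom T S.z0 S.z0}" using S.z0 unfolding is_zero_obj_def by blast
  have "hom T' (fo S.z0) (fo S.z0) = fm S.z0 S.z0 ` hom T S.z0 S.z0" using fm_bij[of S.z0 S.z0]
    unfolding bij_betw_def by auto
  then have single: "\<And>a b. a \<in> hom T' (fo S.z0) (fo S.z0) \<Longrightarrow> b \<in> hom T' (fo S.z0) (fo S.z0) \<Longrightarrow> a = b"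
    using hz by auto
  have "cmp T' (fo S.z0) D.z0 (fo S.z0) (zerom T' D.z0 (fo S.z0)) (zerom T' (fo S.z0) D.z0) = idm T' (fo S.z0)"
    by (rule single) (auto intro: D.homs)
  then show ?thesis unfolding D.retr_def by (meson D.z0_ob D.zero_hom S.z0_ob fo_ob)
qed

lemma preim_thick: assumes Y: "thick T' Y" shows "thick T (preim T fo Y)"
proof (rule S.thickI)
  show "preim T fo Y \<subseteq> ob T" unfolding preim_def by blast
  have "fo S.z0 \<in> Y" using D.thick_retr[OF Y _ D.thick_zero[OF Y D.z0] fz_retr] by simp
  then show "preim T fo Y \<noteq> {}" unfolding preim_def by blast
  show "X \<in> preim T fo Y \<longleftrightarrow> sho T X \<in> preim T fo Y" if X: "X \<in> ob T" for X
  proof -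
    have r: "D.retr (fo (sho T X)) (sho T' (fo X))" "D.retr (sho T' (fo X)) (fo (sho T X))"
      using D.iso_retr[OF _ _ phi_iso[OF X]] X by auto
    have "X \<in> preim T fo Y \<longleftrightarrow> sho T' (fo X) \<in> Y" unfolding preim_def using D.thick_sh[OF Y] X by auto
    also have "\<dots> \<longleftrightarrow> fo (sho T X) \<in> Y" using D.thick_retr[OF Y] r X by auto
    finally show ?thesis unfolding preim_def using X by auto
  qed
  show "X \<in> ob T \<Longrightarrow> Z \<in> ob T \<Longrightarrow> is_iso T X Z u \<Longrightarrow> X \<in> preim T fo Y \<Longrightarrow> Z \<in> preim T fo Y" for X Z u
    unfolding preim_def using D.thick_retr[OF Y] fm_retr S.iso_retr by blast
  show "(X,Y1,Z,f,g,h) \<in> dist T \<Longrightarrow> X \<in> preim T fo Y \<Longrightarrow> Y1 \<in> preim T fo Y \<Longrightarrow> Z \<in> preim T fo Y" for X Y1 Z f g h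
  proof -
    assume d: "(X,Y1,Z,f,g,h) \<in> dist T" and "X \<in> preim T fo Y" "Y1 \<in> preim T fo Y"
    then show "Z \<in> preim T fo Y" using D.thick_tri(1)[OF Y fm_dist[OF d]] S.distD[OF d]
      unfolding preim_def by auto
  qed
  show "(X,Y1,Z,f,g,h) \<in> dist T \<Longrightarrow> Y1 \<in> preim T fo Y \<Longrightarrow> Z \<in> preim T fo Y \<Longrightarrow> X \<in> preim T fo Y" for X Y1 Z f g h
  proof -
    assume d: "(X,Y1,Z,f,g,h) \<in> dist T" and "Y1 \<in> preim T fo Y" "Z \<in> preim T fo Y"
    then show "X \<in> preim T fo Y" using D.thick_tri(2)[OF Y fm_dist[OF d]] S.distD[OF d]
      unfolding preim_def by auto
  qed
  show "(X,Y1,Z,f,g,h) \<in> dist T \<Longrightarrow> Z \<in> preim T fo Y \<Longrightarrow> X \<in> preim T fo Y \<Longrightarrow> Y1 \<in> preim T fo Y" for X Y1 Z f g h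
  proof -
    assume d: "(X,Y1,Z,f,g,h) \<in> dist T" and "Z \<in> preim T fo Y" "X \<in> preim T fo Y"
    then show "Y1 \<in> preim T fo Y" using D.thick_tri(3)[OF Y fm_dist[OF d]] S.distD[OF d]
      unfolding preim_def by auto
  qed
  show "X \<in> ob T \<Longrightarrow> Z \<in> preim T fo Y \<Longrightarrow> is_summand T X Z \<Longrightarrow> X \<in> preim T fo Y" for X Z
    unfolding preim_def using D.thick_retr[OF Y] fm_retr S.summ_retr by blast
qed

end

context tfun begin

lemma K: assumes X: "X \<in> ob T'"
  shows "\<exists>N\<in>ob T. D.retr X (fo N) \<and> (\<forall>Y. thick T' Y \<longrightarrow> X \<in> Y \<longrightarrow> fo N \<in> Y)"
proof -
  obtain M where M: "M \<in> ob T" "is_summand T' X (fo M)" using dense X by blast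
  then obtain W i1 i2 p1 p2 where bp: "is_biproduct T' X W (fo M) i1 i2 p1 p2" unfolding is_summand_def by blast
  define F where "F = fo M"
  have F: "F \<in> ob T'" unfolding F_def using M by simp
  have W: "W \<in> ob T'" and i1: "i1 \<in> hom T' X F" and i2: "i2 \<in> hom T' W F" and p1: "p1 \<in> hom T' F X"
    and p2: "p2 \<in> hom T' F W" and p1i1: "cmp T' X F X p1 i1 = idm T' X" and p2i2: "cmp T' W F W p2 i2 = idm T' W"
    and sum: "addm T' F F (cmp T' F X F i1 p1) (cmp T' F W F i2 p2) = idm T' F"
    using bp unfolding is_biproduct_def F_def by auto
  define e where "e = cmp T' F W F i2 p2"
  have e: "e \<in> hom T' F F" unfolding e_def using F W i2 p2 by (auto intro: D.homs)
  obtain a where a: "a \<in> hom T M M" "e = fm M M a" using fm_surj[of M M] M e unfolding F_def by blast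
  obtain K g h where dK: "(M, M, K, a, g, h) \<in> dist T" using S.tr_ext M a by blast
  have K: "K \<in> ob T" using S.distD[OF dK] by blast
  obtain hh where d1: "(F, F, fo K, cmp T' F W F i2 p2, fm M K g, hh) \<in> dist T'"
    using fm_dist[OF dK] a unfolding F_def e_def by auto
  obtain Cp f2 f3 where dp: "(F, W, Cp, p2, f2, f3) \<in> dist T'" using D.tr_ext F W p2 by blast
  obtain Ci g2 g3 where di: "(W, F, Ci, i2, g2, g3) \<in> dist T'" using D.tr_ext F W i2 by blast
  have Cp: "Cp \<in> ob T'" and f2: "f2 \<in> hom T' W Cp" using D.distD[OF dp] by auto
  have Ci: "Ci \<in> ob T'" and g2: "g2 \<in> hom T' F Ci" and g3: "g3 \<in> hom T' Ci (sho T' W)" using D.distD[OF di] by auto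
  obtain u v where dC0: "(Cp, fo K, Ci, u, v, cmp T' Ci (sho T' W) (sho T' Cp) (shm T' W Cp f2) g3) \<in> dist T'"
    using D.tr4[OF dp di d1] by blast
  have "f2 = cmp T' W W Cp f2 (cmp T' W F W p2 i2)" using p2i2 W Cp f2 by simp
  also have "\<dots> = cmp T' W F Cp (cmp T' F W Cp f2 p2) i2"
    using D.assoc[of W F W Cp i2 p2 f2] W F Cp f2 p2 i2 by simp
  also have "\<dots> = zerom T' W Cp" using D.comp_zero[OF dp] W F Cp i2 by simp
  finally have f20: "f2 = zerom T' W Cp" .
  have dC: "(Cp, fo K, Ci, u, v, zerom T' Ci (sho T' Cp)) \<in> dist T'"
    using dC0 f20 W Cp Ci g3 by simp
  have v: "v \<in> hom T' (fo K) Ci" using D.distD[OF dC] by blast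
  have "cmp T' Ci Ci (sho T' Cp) (zerom T' Ci (sho T' Cp)) (idm T' Ci) = zerom T' Ci (sho T' Cp)"
    using Ci Cp by simp
  then obtain s where s: "s \<in> hom T' Ci (fo K)" "cmp T' Ci (fo K) Ci v s = idm T' Ci"
    using D.exact_cov[OF D.tr_rot[OF dC] Ci D.idm_hom[OF Ci]] by blast
  have rCiK: "D.retr Ci (fo K)" unfolding D.retr_def using s v by blast
  have dz: "(W, W, D.z0, cmp T' W F W p2 i2, zerom T' W D.z0, zerom T' D.z0 (sho T' W)) \<in> dist T'"
    using D.tr_triv[OF W D.z0] p2i2 by simp
  obtain u' v' where dCz: "(Ci, D.z0, Cp, u', v', cmp T' Cp (sho T' F) (sho T' Ci) (shm T' F Ci g2) f3) \<in> dist T'"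
    using D.tr4[OF di dp dz] by blast
  obtain s' where s': "s' \<in> hom T' Ci F" "cmp T' Ci F Ci g2 s' = idm T' Ci"
     "addm T' F F (cmp T' F W F i2 p2) (cmp T' F Ci F s' g2) = idm T' F"
    using D.L_split[OF di p2 p2i2] by blast
  have "addm T' F F (cmp T' F W F i2 p2) (cmp T' F Ci F s' g2) = addm T' F F (cmp T' F W F i2 p2) (cmp T' F X F i1 p1)"
    using s'(3) sum D.add_comm[of F F "cmp T' F X F i1 p1" "cmp T' F W F i2 p2"] F X W i1 i2 p1 p2
    by (simp add: D.homs)
  then have sg: "cmp T' F Ci F s' g2 = cmp T' F X F i1 p1"
    using D.add_cancel_l F X W Ci i1 i2 p1 p2 s' g2 by (meson D.cmp_hom)
  have "cmp T' X Ci F s' (cmp T' X F Ci g2 i1) = cmp T' X F F (cmp T' F Ci F s' g2) i1"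
    using D.assoc[of X F Ci F i1 g2 s'] X F Ci i1 g2 s' by simp
  also have "\<dots> = cmp T' X X F i1 (cmp T' X F X p1 i1)"
    using sg D.assoc[of X F X F i1 p1 i1] X F i1 p1 by simp
  finally have sgi: "cmp T' X Ci F s' (cmp T' X F Ci g2 i1) = i1" using p1i1 X F i1 by simp
  have "cmp T' X Ci X (cmp T' Ci F X p1 s') (cmp T' X F Ci g2 i1) = cmp T' X F X p1 (cmp T' X Ci F s' (cmp T' X F Ci g2 i1))"
    by (rule D.assoc[symmetric]) (use X F Ci i1 g2 s' p1 in \<open>auto intro: D.cmp_hom\<close>)
  then have r1: "cmp T' X Ci X (cmp T' Ci F X p1 s') (cmp T' X F Ci g2 i1) = idm T' X" using sgi p1i1 by simp
  have "cmp T' Ci X F i1 (cmp T' Ci F X p1 s') = cmp T' Ci F F (cmp T' F X F i1 p1) s'"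
    using D.assoc[of Ci F X F s' p1 i1] Ci F X s' p1 i1 by simp
  also have "\<dots> = cmp T' Ci F F (cmp T' F Ci F s' g2) s'" using sg by simp
  also have "\<dots> = cmp T' Ci Ci F s' (cmp T' Ci F Ci g2 s')"
    using D.assoc[of Ci F Ci F s' g2 s'] Ci F s' g2 by simp
  finally have ips: "cmp T' Ci X F i1 (cmp T' Ci F X p1 s') = s'" using s' Ci F by simp
  have "cmp T' Ci X Ci (cmp T' X F Ci g2 i1) (cmp T' Ci F X p1 s') = cmp T' Ci F Ci g2 (cmp T' Ci X F i1 (cmp T' Ci F X p1 s'))"
    by (rule D.assoc[symmetric]) (use X F Ci i1 g2 s' p1 in \<open>auto intro: D.cmp_hom\<close>)
  then have r2: "cmp T' Ci X Ci (cmp T' X F Ci g2 i1) (cmp T' Ci F X p1 s') = idm T' Ci" using ips s' by simp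
  have rXCi: "D.retr X Ci" unfolding D.retr_def using r1 X F Ci i1 g2 s' p1 by (meson D.cmp_hom)
  have rCiX: "D.retr Ci X" unfolding D.retr_def using r2 X F Ci i1 g2 s' p1 by (meson D.cmp_hom)
  have "D.retr X (fo K)" using D.retr_trans[OF X Ci _ rXCi rCiK] K by simp
  moreover have "fo K \<in> Y" if Y: "thick T' Y" and XY: "X \<in> Y" for Y
  proof -
    have "Ci \<in> Y" using D.thick_retr[OF Y Ci XY rCiX] .
    moreover have "D.z0 \<in> Y" using D.thick_zero[OF Y D.z0] .
    ultimately have "Cp \<in> Y" using D.thick_tri(1)[OF Y dCz] by blast
    then show "fo K \<in> Y" using D.thick_tri(3)[OF Y dC] \<open>Ci \<in> Y\<close> by blast
  qed
  ultimately show ?thesis using K by blast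
qed

end

context tcat begin
lemma retr_sh: assumes A: "A \<in> ob C" and B: "B \<in> ob C" and r: "retr A B" shows "retr (sho C A) (sho C B)"
proof -
  obtain i p where i: "i \<in> hom C A B" "p \<in> hom C B A" "cmp C A B A p i = idm C A" using r unfolding retr_def by blast
  have "cmp C (sho C A) (sho C B) (sho C A) (shm C B A p) (shm C A B i) = idm C (sho C A)"
    using shm_cmp[of A B A i p, symmetric] i A B by simp
  then show ?thesis unfolding retr_def using i A B by (meson shm_hom)
qed
lemma retr_unsh: assumes A: "A \<in> ob C" and B: "B \<in> ob C" and r: "retr (sho C A) (sho C B)" shows "retr A B"
proof -
  obtain i' p' where i': "i' \<in> hom C (sho C A) (sho C B)" "p' \<in> hom C (sho C B) (sho C A)"
    "cmp C (sho C A) (sho C B) (sho C A) p' i' = idm C (sho C A)" using r unfolding retr_def by blast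
  obtain i where i: "i \<in> hom C A B" "i' = shm C A B i" using shm_surj A B i' by blast
  obtain p where p: "p \<in> hom C B A" "p' = shm C B A p" using shm_surj A B i' by blast
  have "shm C A A (cmp C A B A p i) = shm C A A (idm C A)" using shm_cmp[of A B A i p] i p i' A B by simp
  then have "cmp C A B A p i = idm C A" using shm_inj A B i p by (meson cmp_hom idm_hom)
  then show ?thesis unfolding retr_def using i p by blast
qed
end

context tfun begin

definition Ret where "Ret S = {X \<in> ob T'. \<exists>M\<in>S. D.retr X (fo M)}"

lemma Ret_sh1: assumes S: "thick T S" and X: "X \<in> ob T'" and XS: "X \<in> Ret S" shows "sho T' X \<in> Ret S"
proof -
  obtain M where M: "M \<in> S" "D.retr X (fo M)" using XS unfolding Ret_def by blast
  have Mo: "M \<in> ob T" using M S.thick_sub[OF S] by blast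
  have "D.retr (sho T' X) (sho T' (fo M))" using D.retr_sh[OF X _ M(2)] Mo by simp
  moreover have "D.retr (sho T' (fo M)) (fo (sho T M))" using D.iso_retr(2)[OF _ _ phi_iso[OF Mo]] Mo by simp
  ultimately have "D.retr (sho T' X) (fo (sho T M))" using D.retr_trans X Mo by (meson D.sho_ob S.sho_ob fo_ob)
  moreover have "sho T M \<in> S" using S.thick_sh[OF S Mo] M by blast
  ultimately show ?thesis unfolding Ret_def using X by blast
qed

lemma Ret_sh2: assumes S: "thick T S" and X: "X \<in> ob T'" and XS: "sho T' X \<in> Ret S" shows "X \<in> Ret S"
proof -
  obtain M where M: "M \<in> S" "D.retr (sho T' X) (fo M)" using XS unfolding Ret_def by blast
  have Mo: "M \<in> ob T" using M S.thick_sub[OF S] by blast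
  obtain M' u where M': "M' \<in> ob T" "is_iso T (sho T M') M u" using S.sh_esurj Mo by blast
  have "sho T M' \<in> S" using S.thick_retr[OF S _ M(1) S.iso_retr(1)[OF _ Mo M'(2)]] M' by simp
  then have M'S: "M' \<in> S" using S.thick_sh[OF S M'(1)] by blast
  have "D.retr (fo M) (fo (sho T M'))" using fm_retr S.iso_retr(2)[OF _ Mo M'(2)] Mo M' by simp
  moreover have "D.retr (fo (sho T M')) (sho T' (fo M'))" using D.iso_retr(1)[OF _ _ phi_iso[OF M'(1)]] M' by simp
  ultimately have "D.retr (sho T' X) (sho T' (fo M'))" using D.retr_trans[OF _ _ _ M(2)] X Mo M'
    by (meson D.retr_trans D.sho_ob S.sho_ob fo_ob)
  then have "D.retr X (fo M')" using D.retr_unsh X M' by simp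
  then show ?thesis unfolding Ret_def using X M'S by blast
qed

lemma Ret_tri: assumes S: "thick T S" and d: "(X1,X2,X3,f,g,h) \<in> dist T'"
  and X1: "X1 \<in> Ret S" and X2: "X2 \<in> Ret S" shows "X3 \<in> Ret S"
proof -
  note DD = D.distD[OF d]
  obtain M1 where M1: "M1 \<in> S" "D.retr X1 (fo M1)" using X1 unfolding Ret_def by blast
  obtain M2 where M2: "M2 \<in> S" "D.retr X2 (fo M2)" using X2 unfolding Ret_def by blast
  have M1o: "M1 \<in> ob T" and M2o: "M2 \<in> ob T" using M1 M2 S.thick_sub[OF S] by auto
  define F1 where "F1 = fo M1"
  define F2 where "F2 = fo M2"
  have F1: "F1 \<in> ob T'" and F2: "F2 \<in> ob T'" unfolding F1_def F2_def using M1o M2o by auto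
  obtain j1 r1 where j1: "j1 \<in> hom T' X1 F1" "r1 \<in> hom T' F1 X1" "cmp T' X1 F1 X1 r1 j1 = idm T' X1"
    using M1 unfolding D.retr_def F1_def by blast
  obtain j2 r2 where j2: "j2 \<in> hom T' X2 F2" "r2 \<in> hom T' F2 X2" "cmp T' X2 F2 X2 r2 j2 = idm T' X2"
    using M2 unfolding D.retr_def F2_def by blast
  define w' where "w' = cmp T' F1 X2 F2 j2 (cmp T' F1 X1 X2 f r1)"
  have w': "w' \<in> hom T' F1 F2" unfolding w'_def using j1 j2 DD F1 F2 by (auto intro: D.homs)
  obtain w where w: "w \<in> hom T M1 M2" "w' = fm M1 M2 w" using fm_surj M1o M2o w' unfolding F1_def F2_def by blast
  obtain M3 g3 h3 where dM: "(M1, M2, M3, w, g3, h3) \<in> dist T" using S.tr_ext M1o M2o w by blast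
  have M3S: "M3 \<in> S" using S.thick_tri(1)[OF S dM M1(1) M2(1)] .
  have M3o: "M3 \<in> ob T" using S.distD[OF dM] by blast
  define F3 where "F3 = fo M3"
  have F3: "F3 \<in> ob T'" unfolding F3_def using M3o by simp
  obtain G H where dF: "(F1, F2, F3, w', G, H) \<in> dist T'"
    using fm_dist[OF dM] w unfolding F1_def F2_def F3_def by auto
  note FF = D.distD[OF dF]
  have "cmp T' X1 F1 F2 w' j1 = cmp T' X1 X2 F2 j2 (cmp T' X1 F1 X2 (cmp T' F1 X1 X2 f r1) j1)"
    unfolding w'_def by (rule D.assoc[symmetric]) (use j1 j2 DD F1 F2 in \<open>auto intro: D.homs\<close>)
  also have "cmp T' X1 F1 X2 (cmp T' F1 X1 X2 f r1) j1 = cmp T' X1 X1 X2 f (cmp T' X1 F1 X1 r1 j1)"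
    by (rule D.assoc[symmetric]) (use j1 j2 DD F1 F2 in \<open>auto intro: D.homs\<close>)
  finally have sq1: "cmp T' X1 X2 F2 j2 f = cmp T' X1 F1 F2 w' j1" using j1 DD by simp
  obtain c where c: "tri_morph T' X1 X2 X3 f g h F1 F2 F3 w' G H j1 j2 c"
    using D.tr3[OF d dF j1(1) j2(1) sq1] by blast
  then have c1: "c \<in> hom T' X3 F3" and c2: "cmp T' X2 X3 F3 c g = cmp T' X2 F2 F3 G j2"
    and c3: "cmp T' X3 (sho T' X1) (sho T' F1) (shm T' X1 F1 j1) h = cmp T' X3 F3 (sho T' F1) H c"
    unfolding tri_morph_def by auto
  have "cmp T' F1 F2 X2 r2 w' = cmp T' F1 X2 X2 (cmp T' X2 F2 X2 r2 j2) (cmp T' F1 X1 X2 f r1)"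
    unfolding w'_def by (rule D.assoc) (use j1 j2 DD F1 F2 in \<open>auto intro: D.homs\<close>)
  then have sq2: "cmp T' F1 F2 X2 r2 w' = cmp T' F1 X1 X2 f r1" using j1 j2 DD F1 by (simp add: D.homs)
  obtain d' where d': "tri_morph T' F1 F2 F3 w' G H X1 X2 X3 f g h r1 r2 d'"
    using D.tr3[OF dF d j1(2) j2(2) sq2] by blast
  then have d1: "d' \<in> hom T' F3 X3" and d2: "cmp T' F2 F3 X3 d' G = cmp T' F2 X2 X3 g r2"
    and d3: "cmp T' F3 (sho T' F1) (sho T' X1) (shm T' F1 X1 r1) H = cmp T' F3 X3 (sho T' X1) h d'"
    unfolding tri_morph_def by auto
  define \<phi> where "\<phi> = cmp T' X3 F3 X3 d' c"
  have \<phi>: "\<phi> \<in> hom T' X3 X3" unfolding \<phi>_def using c1 d1 DD F3 by (auto intro: D.homs)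
  have "cmp T' X2 X3 X3 \<phi> g = cmp T' X2 F3 X3 d' (cmp T' X2 X3 F3 c g)"
    unfolding \<phi>_def by (rule D.assoc[symmetric]) (use c1 d1 DD F3 in \<open>auto intro: D.homs\<close>)
  also have "\<dots> = cmp T' X2 F2 X3 (cmp T' F2 F3 X3 d' G) j2"
    unfolding c2 by (rule D.assoc) (use c1 d1 DD F3 F2 FF j2 in \<open>auto intro: D.homs\<close>)
  also have "\<dots> = cmp T' X2 X2 X3 g (cmp T' X2 F2 X2 r2 j2)"
    unfolding d2 by (rule D.assoc[symmetric]) (use DD F2 j2 in \<open>auto intro: D.homs\<close>)
  finally have \<phi>g: "cmp T' X2 X3 X3 \<phi> g = g" using j2 DD by simp
  have "cmp T' X3 X3 (sho T' X1) h \<phi> = cmp T' X3 F3 (sho T' X1) (cmp T' F3 X3 (sho T' X1) h d') c"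
    unfolding \<phi>_def by (rule D.assoc) (use c1 d1 DD F3 in \<open>auto intro: D.homs\<close>)
  also have "\<dots> = cmp T' X3 (sho T' F1) (sho T' X1) (shm T' F1 X1 r1) (cmp T' X3 F3 (sho T' F1) H c)"
    unfolding d3[symmetric] by (rule D.assoc[symmetric]) (use c1 FF F1 F3 DD j1 in \<open>auto intro: D.homs\<close>)
  also have "\<dots> = cmp T' X3 (sho T' X1) (sho T' X1) (cmp T' (sho T' X1) (sho T' F1) (sho T' X1) (shm T' F1 X1 r1) (shm T' X1 F1 j1)) h"
    unfolding c3[symmetric] by (rule D.assoc) (use c1 FF F1 F3 DD j1 in \<open>auto intro: D.homs\<close>)
  also have "cmp T' (sho T' X1) (sho T' F1) (sho T' X1) (shm T' F1 X1 r1) (shm T' X1 F1 j1) = idm T' (sho T' X1)"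
    using D.shm_cmp[of X1 F1 X1 j1 r1, symmetric] j1 DD F1 by simp
  finally have h\<phi>: "cmp T' X3 X3 (sho T' X1) h \<phi> = h" using DD by simp
  have iso: "is_iso T' X3 X3 \<phi>" using D.five_endo[OF d \<phi> \<phi>g h\<phi>] .
  then obtain \<psi> where \<psi>: "\<psi> \<in> hom T' X3 X3" "cmp T' X3 X3 X3 \<psi> \<phi> = idm T' X3" unfolding is_iso_def by blast
  have "cmp T' X3 F3 X3 (cmp T' F3 X3 X3 \<psi> d') c = cmp T' X3 X3 X3 \<psi> \<phi>"
    unfolding \<phi>_def by (rule D.assoc[symmetric]) (use c1 d1 DD F3 \<psi> in \<open>auto intro: D.homs\<close>)
  then have "D.retr X3 F3" unfolding D.retr_def using \<psi> c1 d1 DD F3 by (metis D.cmp_hom)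
  then show ?thesis unfolding Ret_def F3_def using M3S DD by blast
qed

lemma Ret_thick: assumes S: "thick T S" shows "thick T' (Ret S)"
proof (rule D.thickI)
  show "Ret S \<subseteq> ob T'" unfolding Ret_def by blast
  obtain M where "M \<in> S" using S.thick_ne[OF S] by blast
  then have "fo M \<in> Ret S" unfolding Ret_def using D.retr_refl S.thick_sub[OF S] by blast
  then show "Ret S \<noteq> {}" by blast
  show "X \<in> ob T' \<Longrightarrow> X \<in> Ret S \<longleftrightarrow> sho T' X \<in> Ret S" for X using Ret_sh1 Ret_sh2 S by blast
  show "X \<in> ob T' \<Longrightarrow> Y \<in> ob T' \<Longrightarrow> is_iso T' X Y u \<Longrightarrow> X \<in> Ret S \<Longrightarrow> Y \<in> Ret S" for X Y u
    unfolding Ret_def using D.iso_retr(2) D.retr_trans S.thick_sub[OF S] by (smt (verit) fo_ob mem_Collect_eq subsetD)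
  show "(X,Y,Z,f,g,h) \<in> dist T' \<Longrightarrow> X \<in> Ret S \<Longrightarrow> Y \<in> Ret S \<Longrightarrow> Z \<in> Ret S" for X Y Z f g h
    using Ret_tri S by blast
  show "(X,Y,Z,f,g,h) \<in> dist T' \<Longrightarrow> Y \<in> Ret S \<Longrightarrow> Z \<in> Ret S \<Longrightarrow> X \<in> Ret S" for X Y Z f g h
  proof -
    assume d: "(X,Y,Z,f,g,h) \<in> dist T'" "Y \<in> Ret S" "Z \<in> Ret S"
    then have "sho T' X \<in> Ret S" using Ret_tri[OF S D.tr_rot[OF d(1)]] by blast
    then show "X \<in> Ret S" using Ret_sh2[OF S] D.distD[OF d(1)] by blast
  qed
  show "(X,Y,Z,f,g,h) \<in> dist T' \<Longrightarrow> Z \<in> Ret S \<Longrightarrow> X \<in> Ret S \<Longrightarrow> Y \<in> Ret S" for X Y Z f g h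
  proof -
    assume d: "(X,Y,Z,f,g,h) \<in> dist T'" "Z \<in> Ret S" "X \<in> Ret S"
    then have "sho T' X \<in> Ret S" using Ret_sh1[OF S] D.distD[OF d(1)] by blast
    then have "sho T' Y \<in> Ret S" using Ret_tri[OF S D.tr_rot[OF D.tr_rot[OF d(1)]]] d by blast
    then show "Y \<in> Ret S" using Ret_sh2[OF S] D.distD[OF d(1)] by blast
  qed
  show "X \<in> ob T' \<Longrightarrow> Y \<in> Ret S \<Longrightarrow> is_summand T' X Y \<Longrightarrow> X \<in> Ret S" for X Y
    unfolding Ret_def using D.summ_retr D.retr_trans S.thick_sub[OF S] by (smt (verit) fo_ob mem_Collect_eq subsetD)
qed

lemma preim_Ret: assumes S: "thick T S" shows "preim T fo (Ret S) = S"
proof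
  show "S \<subseteq> preim T fo (Ret S)" unfolding preim_def Ret_def using D.retr_refl S.thick_sub[OF S] by blast
  show "preim T fo (Ret S) \<subseteq> S"
  proof
    fix N assume "N \<in> preim T fo (Ret S)"
    then obtain M where N: "N \<in> ob T" and M: "M \<in> S" "D.retr (fo N) (fo M)" unfolding preim_def Ret_def by blast
    then have "S.retr N M" using ff_retr S.thick_sub[OF S] by blast
    then show "N \<in> S" using S.thick_retr[OF S N M(1)] by blast
  qed
qed

lemma Ret_preim: assumes Y: "thick T' Y" shows "Ret (preim T fo Y) = Y"
proof
  show "Ret (preim T fo Y) \<subseteq> Y" unfolding Ret_def preim_def using D.thick_retr[OF Y] by blast
  show "Y \<subseteq> Ret (preim T fo Y)"
  proof
    fix X assume XY: "X \<in> Y"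
    then have X: "X \<in> ob T'" using D.thick_sub[OF Y] by blast
    obtain N where N: "N \<in> ob T" "D.retr X (fo N)" "\<forall>Y. thick T' Y \<longrightarrow> X \<in> Y \<longrightarrow> fo N \<in> Y" using K[OF X] by blast
    then show "X \<in> Ret (preim T fo Y)" unfolding Ret_def preim_def using X XY Y by blast
  qed
qed

end

lemma order_iso_unique_min:
  assumes gB: "\<And>A. A \<in> \<A> \<Longrightarrow> g A \<in> \<B>" and rA: "\<And>B. B \<in> \<B> \<Longrightarrow> r B \<in> \<A> \<and> g (r B) = B"
    and rg: "\<And>A. A \<in> \<A> \<Longrightarrow> r (g A) = A"
    and mono: "\<And>A B. A \<in> \<A> \<Longrightarrow> B \<in> \<A> \<Longrightarrow> g A \<subseteq> g B \<longleftrightarrow> A \<subseteq> B"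
    and Q: "Q \<in> \<A>"
  shows "(\<exists>!X. X \<in> \<A> \<and> Q \<subset> X \<and> \<not> (\<exists>X'. X' \<in> \<A> \<and> Q \<subset> X' \<and> X' \<subset> X)) \<longleftrightarrow>
         (\<exists>!Y. Y \<in> \<B> \<and> g Q \<subset> Y \<and> \<not> (\<exists>Y'. Y' \<in> \<B> \<and> g Q \<subset> Y' \<and> Y' \<subset> Y))"
proof -
  have strict: "g A \<subset> g B \<longleftrightarrow> A \<subset> B" if "A \<in> \<A>" "B \<in> \<A>" for A B
    using mono[OF that] mono[OF that(2,1)] by (simp add: less_le_not_le)
  define mD where "mD X \<longleftrightarrow> X \<in> \<A> \<and> Q \<subset> X \<and> \<not> (\<exists>X'. X' \<in> \<A> \<and> Q \<subset> X' \<and> X' \<subset> X)" for X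
  define mT where "mT Y \<longleftrightarrow> Y \<in> \<B> \<and> g Q \<subset> Y \<and> \<not> (\<exists>Y'. Y' \<in> \<B> \<and> g Q \<subset> Y' \<and> Y' \<subset> Y)" for Y
  have key: "mD X \<longleftrightarrow> mT (g X)" if X: "X \<in> \<A>" for X
  proof
    assume m: "mD X"
    have QX: "Q \<subset> X" and nm: "\<And>X'. X' \<in> \<A> \<Longrightarrow> Q \<subset> X' \<Longrightarrow> X' \<subset> X \<Longrightarrow> False" using m unfolding mD_def by auto
    have "\<not> (\<exists>Y'. Y' \<in> \<B> \<and> g Q \<subset> Y' \<and> Y' \<subset> g X)"
    proof
      assume "\<exists>Y'. Y' \<in> \<B> \<and> g Q \<subset> Y' \<and> Y' \<subset> g X"
      then obtain Y' where Y': "Y' \<in> \<B>" "g Q \<subset> Y'" "Y' \<subset> g X" by blast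
      have rY: "r Y' \<in> \<A>" "g (r Y') = Y'" using rA[OF Y'(1)] by auto
      have "Q \<subset> r Y'" using strict[OF Q rY(1)] Y'(2) rY(2) by simp
      moreover have "r Y' \<subset> X" using strict[OF rY(1) X] Y'(3) rY(2) by simp
      ultimately show False using nm rY(1) by blast
    qed
    moreover have "g Q \<subset> g X" using strict[OF Q X] QX by simp
    ultimately show "mT (g X)" using gB[OF X] unfolding mT_def by blast
  next
    assume m: "mT (g X)"
    have QX: "g Q \<subset> g X" and nm: "\<And>Y'. Y' \<in> \<B> \<Longrightarrow> g Q \<subset> Y' \<Longrightarrow> Y' \<subset> g X \<Longrightarrow> False" using m unfolding mT_def by auto
    have "\<not> (\<exists>X'. X' \<in> \<A> \<and> Q \<subset> X' \<and> X' \<subset> X)"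
    proof
      assume "\<exists>X'. X' \<in> \<A> \<and> Q \<subset> X' \<and> X' \<subset> X"
      then obtain X' where X': "X' \<in> \<A>" "Q \<subset> X'" "X' \<subset> X" by blast
      have "g Q \<subset> g X'" using strict[OF Q X'(1)] X'(2) by simp
      moreover have "g X' \<subset> g X" using strict[OF X'(1) X] X'(3) by simp
      ultimately show False using nm gB[OF X'(1)] by blast
    qed
    moreover have "Q \<subset> X" using strict[OF Q X] QX by simp
    ultimately show "mD X" using X unfolding mD_def by blast
  qed
  have mDA: "mD X \<Longrightarrow> X \<in> \<A>" for X unfolding mD_def by blast
  have mTB: "mT Y \<Longrightarrow> Y \<in> \<B>" for Y unfolding mT_def by blast
  have "(\<exists>!X. mD X) \<longleftrightarrow> (\<exists>!Y. mT Y)"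
  proof
    assume "\<exists>!X. mD X"
    then obtain X where X: "mD X" "\<And>X'. mD X' \<Longrightarrow> X' = X" by blast
    have "mT (g X)" using key[OF mDA[OF X(1)]] X(1) by blast
    moreover have "Y = g X" if "mT Y" for Y
    proof -
      have B: "Y \<in> \<B>" using mTB[OF that] .
      have "mD (r Y)" using key[of "r Y"] rA[OF B] that by auto
      then have "r Y = X" using X by blast
      then show ?thesis using rA[OF B] by metis
    qed
    ultimately show "\<exists>!Y. mT Y" by blast
  next
    assume "\<exists>!Y. mT Y"
    then obtain Y where Y: "mT Y" "\<And>Y'. mT Y' \<Longrightarrow> Y' = Y" by blast
    have B: "Y \<in> \<B>" using mTB[OF Y(1)] .
    have "mD (r Y)" using key[of "r Y"] rA[OF B] Y(1) by auto
    moreover have "X = r Y" if "mD X" for X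
    proof -
      have "g X = Y" using key[OF mDA[OF that]] that Y(2) by blast
      then show ?thesis using rg[OF mDA[OF that]] by metis
    qed
    ultimately show "\<exists>!X. mD X" by blast
  qed
  then show ?thesis unfolding mD_def mT_def .
qed

context tfun begin

lemma Ret_mono: "A \<subseteq> B \<Longrightarrow> Ret A \<subseteq> Ret B" unfolding Ret_def by blast

lemma preim_order: assumes "thick T' A" "thick T' B" shows "preim T fo A \<subseteq> preim T fo B \<longleftrightarrow> A \<subseteq> B"
proof
  assume "preim T fo A \<subseteq> preim T fo B"
  then have "Ret (preim T fo A) \<subseteq> Ret (preim T fo B)" by (rule Ret_mono)
  then show "A \<subseteq> B" using Ret_preim[OF assms(1)] Ret_preim[OF assms(2)] by simp
qed (auto simp: preim_def)

lemma Th_bij: "bij_betw (preim T fo) (Th T') (Th T)"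
proof (rule bij_betw_imageI)
  show "inj_on (preim T fo) (Th T')"
  proof (rule inj_onI)
    fix A B assume "A \<in> Th T'" "B \<in> Th T'" "preim T fo A = preim T fo B"
    then show "A = B" using Ret_preim unfolding Th_def by (metis mem_Collect_eq)
  qed
  show "preim T fo ` Th T' = Th T"
  proof
    show "preim T fo ` Th T' \<subseteq> Th T" unfolding Th_def using preim_thick by blast
    show "Th T \<subseteq> preim T fo ` Th T'"
    proof
      fix S assume "S \<in> Th T"
      then have S: "thick T S" unfolding Th_def by simp
      have "Ret S \<in> Th T'" using Ret_thick[OF S] unfolding Th_def by simp
      moreover have "S = preim T fo (Ret S)" using preim_Ret[OF S] by simp
      ultimately show "S \<in> preim T fo ` Th T'" by blast
    qed
  qed
qed

lemma preim_inter: "preim T fo (A \<inter> B) = preim T fo A \<inter> preim T fo B"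
  unfolding preim_def by blast

lemma preim_join: assumes A: "thick T' A" and B: "thick T' B"
  shows "preim T fo (thick_join T' A B) = thick_join T (preim T fo A) (preim T fo B)"
proof
  have AB: "A \<union> B \<subseteq> ob T'" using A B D.thick_sub by blast
  have pAB: "preim T fo A \<union> preim T fo B \<subseteq> ob T" unfolding preim_def by blast
  have J': "thick T' (thick_join T' A B)" "A \<union> B \<subseteq> thick_join T' A B" using D.thick_join_thick[OF AB] by auto
  show "thick_join T (preim T fo A) (preim T fo B) \<subseteq> preim T fo (thick_join T' A B)"
    using S.thick_join_thick(3)[OF pAB preim_thick[OF J'(1)]] J'(2) unfolding preim_def by blast
  define J where "J = thick_join T (preim T fo A) (preim T fo B)"
  have J: "thick T J" "preim T fo A \<union> preim T fo B \<subseteq> J" unfolding J_def using S.thick_join_thick[OF pAB] by auto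
  have "A \<subseteq> Ret J" "B \<subseteq> Ret J" using preim_order[OF A Ret_thick[OF J(1)]] preim_order[OF B Ret_thick[OF J(1)]]
    preim_Ret[OF J(1)] J(2) by auto
  then have "thick_join T' A B \<subseteq> Ret J" using D.thick_join_thick(3)[OF AB Ret_thick[OF J(1)]] by blast
  then have "preim T fo (thick_join T' A B) \<subseteq> preim T fo (Ret J)" unfolding preim_def by blast
  then show "preim T fo (thick_join T' A B) \<subseteq> J" using preim_Ret[OF J(1)] by simp
qed

lemma prime_iff: assumes Q: "thick T' Q" shows "prime_thick T' Q \<longleftrightarrow> prime_thick T (preim T fo Q)"
proof -
  have "(\<exists>!X. X \<in> Th T' \<and> Q \<subset> X \<and> \<not> (\<exists>X'. X' \<in> Th T' \<and> Q \<subset> X' \<and> X' \<subset> X)) \<longleftrightarrow>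
         (\<exists>!Y. Y \<in> Th T \<and> preim T fo Q \<subset> Y \<and> \<not> (\<exists>Y'. Y' \<in> Th T \<and> preim T fo Q \<subset> Y' \<and> Y' \<subset> Y))"
  proof (rule order_iso_unique_min[where r = Ret])
    show "\<And>A. A \<in> Th T' \<Longrightarrow> preim T fo A \<in> Th T" unfolding Th_def using preim_thick by simp
    show "\<And>B. B \<in> Th T \<Longrightarrow> Ret B \<in> Th T' \<and> preim T fo (Ret B) = B" unfolding Th_def
      using Ret_thick preim_Ret by simp
    show "\<And>A. A \<in> Th T' \<Longrightarrow> Ret (preim T fo A) = A" unfolding Th_def using Ret_preim by simp
    show "\<And>A B. A \<in> Th T' \<Longrightarrow> B \<in> Th T' \<Longrightarrow> preim T fo A \<subseteq> preim T fo B \<longleftrightarrow> A \<subseteq> B"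
      unfolding Th_def using preim_order by simp
    show "Q \<in> Th T'" unfolding Th_def using Q by simp
  qed
  moreover have "thick T (preim T fo Q)" using preim_thick[OF Q] .
  ultimately show ?thesis unfolding prime_thick_def Th_def using Q by simp
qed

lemma Spec_bij: "bij_betw (preim T fo) (Spec T') (Spec T)"
proof (rule bij_betw_imageI)
  show "inj_on (preim T fo) (Spec T')"
  proof (rule inj_onI)
    fix A B assume "A \<in> Spec T'" "B \<in> Spec T'" "preim T fo A = preim T fo B"
    then have "thick T' A" "thick T' B" unfolding Spec_def prime_thick_def by auto
    then show "A = B" using Ret_preim \<open>preim T fo A = preim T fo B\<close> by metis
  qed
  show "preim T fo ` Spec T' = Spec T"
  proof
    show "preim T fo ` Spec T' \<subseteq> Spec T"
    proof
      fix Q assume "Q \<in> preim T fo ` Spec T'"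
      then obtain P where P: "prime_thick T' P" "Q = preim T fo P" unfolding Spec_def by blast
      then have "thick T' P" unfolding prime_thick_def by blast
      then show "Q \<in> Spec T" using prime_iff P unfolding Spec_def by simp
    qed
    show "Spec T \<subseteq> preim T fo ` Spec T'"
    proof
      fix P assume "P \<in> Spec T"
      then have P: "prime_thick T P" "thick T P" unfolding Spec_def prime_thick_def by auto
      then have "prime_thick T' (Ret P)" using prime_iff[OF Ret_thick[OF P(2)]] preim_Ret[OF P(2)] by simp
      then have "Ret P \<in> Spec T'" unfolding Spec_def by simp
      moreover have "P = preim T fo (Ret P)" using preim_Ret[OF P(2)] by simp
      ultimately show "P \<in> preim T fo ` Spec T'" by blast
    qed
  qed
qed

lemma homeo: "spec_homeo T' T (preim T fo)"
  unfolding spec_homeo_def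
proof (intro conjI allI impI)
  show "bij_betw (preim T fo) (Spec T') (Spec T)" by (rule Spec_bij)
next
  fix A assume "spec_closed T A"
  then obtain E where E: "E \<subseteq> ob T" "A = Zset T E" unfolding spec_closed_def by blast
  have "{P \<in> Spec T'. preim T fo P \<in> A} = Zset T' (fo ` E)"
  proof -
    have "preim T fo P \<in> Spec T" if "P \<in> Spec T'" for P using Spec_bij that unfolding bij_betw_def by blast
    moreover have "preim T fo P \<inter> E = {} \<longleftrightarrow> P \<inter> fo ` E = {}" for P using E(1) unfolding preim_def by blast
    ultimately show ?thesis unfolding E(2) Zset_def by blast
  qed
  moreover have "fo ` E \<subseteq> ob T'" using E(1) by auto
  ultimately show "spec_closed T' {P \<in> Spec T'. preim T fo P \<in> A}" unfolding spec_closed_def by blast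
next
  fix B assume "spec_closed T' B"
  then obtain E' where E': "E' \<subseteq> ob T'" "B = Zset T' E'" unfolding spec_closed_def by blast
  define N where "N X = (SOME N. N \<in> ob T \<and> D.retr X (fo N) \<and> (\<forall>Y. thick T' Y \<longrightarrow> X \<in> Y \<longrightarrow> fo N \<in> Y))" for X
  have N: "N X \<in> ob T \<and> D.retr X (fo (N X)) \<and> (\<forall>Y. thick T' Y \<longrightarrow> X \<in> Y \<longrightarrow> fo (N X) \<in> Y)" if "X \<in> E'" for X
    unfolding N_def by (rule someI_ex) (use K E' that in blast)
  have keyN: "X \<in> P \<longleftrightarrow> N X \<in> preim T fo P" if P: "thick T' P" and X: "X \<in> E'" for P X
  proof
    have NX: "N X \<in> ob T" "D.retr X (fo (N X))" "\<And>Y. thick T' Y \<Longrightarrow> X \<in> Y \<Longrightarrow> fo (N X) \<in> Y"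
      using N[OF X] by auto
    have Xo: "X \<in> ob T'" using E' X by blast
    show "X \<in> P \<Longrightarrow> N X \<in> preim T fo P" unfolding preim_def using NX P by blast
    show "N X \<in> preim T fo P \<Longrightarrow> X \<in> P" unfolding preim_def using D.thick_retr[OF P Xo _ NX(2)] by blast
  qed
  have "preim T fo ` Zset T' E' = Zset T (N ` E')"
  proof
    show "preim T fo ` Zset T' E' \<subseteq> Zset T (N ` E')"
    proof
      fix Q assume "Q \<in> preim T fo ` Zset T' E'"
      then obtain P where P: "P \<in> Spec T'" "P \<inter> E' = {}" "Q = preim T fo P" unfolding Zset_def by blast
      have Pt: "thick T' P" using P unfolding Spec_def prime_thick_def by blast
      have "Q \<in> Spec T" using Spec_bij P unfolding bij_betw_def by blast
      moreover have "Q \<inter> N ` E' = {}" using keyN[OF Pt] P by blast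
      ultimately show "Q \<in> Zset T (N ` E')" unfolding Zset_def by blast
    qed
    show "Zset T (N ` E') \<subseteq> preim T fo ` Zset T' E'"
    proof
      fix Q assume "Q \<in> Zset T (N ` E')"
      then have Q: "Q \<in> Spec T" "Q \<inter> N ` E' = {}" unfolding Zset_def by auto
      then obtain P where P: "P \<in> Spec T'" "Q = preim T fo P" using Spec_bij unfolding bij_betw_def by blast
      have Pt: "thick T' P" using P unfolding Spec_def prime_thick_def by blast
      have "P \<inter> E' = {}" using keyN[OF Pt] P Q by blast
      then show "Q \<in> preim T fo ` Zset T' E'" using P unfolding Zset_def by blast
    qed
  qed
  moreover have "N ` E' \<subseteq> ob T" using N by blast
  ultimately show "spec_closed T (preim T fo ` B)" unfolding spec_closed_def E'(2) by blast
qed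

end

theorem proposition2p11:
  fixes T :: "('o, 'm) tricat" and T' :: "('p, 'n) tricat"
    and fo :: "'o \<Rightarrow> 'p" and fm :: "'o \<Rightarrow> 'o \<Rightarrow> 'm \<Rightarrow> 'n" and phi :: "'o \<Rightarrow> 'n"
  assumes "is_triangulated T" and "is_triangulated T'"
    and "exact_functor T T' fo fm phi"
    and "fully_faithful T T' fo fm"
    and "\<forall>Y\<in>ob T'. \<exists>M\<in>ob T. is_summand T' Y (fo M)"
  shows "(bij_betw (preim T fo) (Th T') (Th T) \<and>
         (\<forall>A\<in>Th T'. \<forall>B\<in>Th T'.
            preim T fo (A \<inter> B) = preim T fo A \<inter> preim T fo B \<and>
            preim T fo (thick_join T' A B) = thick_join T (preim T fo A) (preim T fo B))) \<and>
         (\<forall>Q. thick T' Q \<longrightarrow> (prime_thick T' Q \<longleftrightarrow> prime_thick T (preim T fo Q))) \<and>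
         spec_homeo T' T (preim T fo)"
proof -
  interpret F: tfun T T' fo fm phi
    by (unfold_locales) (use assms in auto)
  have 1: "\<forall>A\<in>Th T'. \<forall>B\<in>Th T'.
            preim T fo (A \<inter> B) = preim T fo A \<inter> preim T fo B \<and>
            preim T fo (thick_join T' A B) = thick_join T (preim T fo A) (preim T fo B)"
    unfolding Th_def using F.preim_inter F.preim_join by simp
  show ?thesis using F.Th_bij 1 F.prime_iff F.homeo by simp
qed


end
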